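(* There is a universal constant $C>0$ such that for every $m\ge0$, every $\Lambda>0$ and every $\psi\in\mathcal H$ lying in the $m$-photon sector with $\|p\psi\|<\infty$ and $(\psi,H_f\psi)<\infty$, \[ \big(\sigma\cdot E^*\psi,\,(p^2+H_f)^{-1}\,\sigma\cdot E^*\psi\big)\le \varepsilon_E\,\|\psi\|^2 + C\Lambda\big(\|p\psi\|^2+\Lambda\,(\psi,H_f\psi)\big), \] where $\varepsilon_E=\sum_{\lambda=1,2}\int_{\mathbb R^3}\frac{|H^\lambda(k)|^2}{|k|^2+|k|}\,dk$.
   Context: $p=-i\nabla_x$. Hilbert space $\mathcal H = L^2(\mathbb R^3;\mathbb C^2)\otimes\mathcal F_b(L^2(\mathbb R^3;\mathbb C^2))$ with bosonic operators $a_\lambda(k),a^*_\lambda(k)$ ($\lambda=1,2$) obeying the canonical commutation relations; the $m$-photon sector is the subspace of vectors whose Fock component is an $m$-particle state. Polarization vectors $\varepsilon_\lambda(k)\in\mathbb R^3$ with $\{k/|k|,\varepsilon_1(k),\varepsilon_2(k)\}$ orthonormal and $\varepsilon_\lambda(-k)=\pm\varepsilon_\lambda(k)$. $\chi(|k|)=1$ for $|k|\le\Lambda$, $0$ otherwise. $H^\lambda(k)=\frac{-i\chi(|k|)}{2\pi|k|^{1/2}}k\wedge\varepsilon_\lambda(k)$, $E(x)=\sum_\lambda\int H^\lambda(k)e^{ik\cdot x}a_\lambda(k)dk$ (a vector of operators) with adjoint $E^*$; $\sigma\cdot E^*=\sum_{j=1}^3\sigma_jE_j^*$ with $\sigma_j$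 the Pauli matrices acting on the spin factor $\mathbb C^2$. $H_f=\sum_\lambda\int|k|a^*_\lambda(k)a_\lambda(k)dk$. *)

theory Defs
  imports "HOL-Analysis.Analysis"
begin

text \<open>Momentum representation: the electron variable is the momentum xi (Fourier
  variable of x), so p acts as multiplication by xi. A vector in the m-photon
  sector is a function psi xi ks s, where ks i = (k_i, lambda_i) for i < m
  (photon momentum and polarization in {1,2}) and s in {0,1} is the spin index.\<close>

type_synonym photon = "(real^3) \<times> nat"
type_synonym msector = "real^3 \<Rightarrow> (nat \<Rightarrow> photon) \<Rightarrow> nat \<Rightarrow> complex"

definition photon_measure :: "photon measure" where
  "photon_measure = lborel \<Otimes>\<^sub>M count_space {1,2}"

definition photons :: "nat \<Rightarrow> (nat \<Rightarrow> photon) measure" where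
  "photons m = PiM {..<m} (\<lambda>_. photon_measure)"

definition polarization :: "(nat \<Rightarrow> real^3 \<Rightarrow> real^3) \<Rightarrow> bool" where
  "polarization eps \<longleftrightarrow>
     (\<forall>l\<in>{1,2}. eps l \<in> borel_measurable borel) \<and>
     (\<forall>k. k \<noteq> 0 \<longrightarrow>
        norm (eps 1 k) = 1 \<and> norm (eps 2 k) = 1 \<and>
        inner k (eps 1 k) = 0 \<and> inner k (eps 2 k) = 0 \<and> inner (eps 1 k) (eps 2 k) = 0) \<and>
     (\<forall>l\<in>{1,2}. \<forall>k. eps l (-k) = eps l k \<or> eps l (-k) = - eps l k)"

definition cutoff :: "real \<Rightarrow> real \<Rightarrow> real" where
  "cutoff \<Lambda> r = (if r \<le> \<Lambda> then 1 else 0)"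

definition Hvec :: "(nat \<Rightarrow> real^3 \<Rightarrow> real^3) \<Rightarrow> real \<Rightarrow> nat \<Rightarrow> real^3 \<Rightarrow> complex^3" where
  "Hvec eps \<Lambda> l k = (\<chi> j. - \<i> * complex_of_real
      (cutoff \<Lambda> (norm k) / (2 * pi * sqrt (norm k)) * (cross3 k (eps l k)) $ j))"

text \<open>Pauli matrices sigma_1, sigma_2, sigma_3 (indices of type 3: 1, 2, 3), spin indices 0,1.\<close>
definition pauli :: "3 \<Rightarrow> nat \<Rightarrow> nat \<Rightarrow> complex" where
  "pauli j s t =
     (if j = 1 then (if s \<noteq> t then 1 else 0)
      else if j = 2 then (if s = 0 \<and> t = 1 then - \<i> else if s = 1 \<and> t = 0 then \<i> else 0)
      else (if s = t then (if s = 0 then 1 else -1) else 0))"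

definition remove_at :: "nat \<Rightarrow> nat \<Rightarrow> (nat \<Rightarrow> photon) \<Rightarrow> (nat \<Rightarrow> photon)" where
  "remove_at m i ks = (\<lambda>j. if j < m then (if j < i then ks j else ks (Suc j)) else undefined)"

text \<open>Component j of E^* applied to an m-photon vector, giving an (m+1)-photon vector,
  in the momentum representation: e^{-ik.x} becomes the shift xi |-> xi + k.\<close>
definition Estar :: "(nat \<Rightarrow> real^3 \<Rightarrow> real^3) \<Rightarrow> real \<Rightarrow> nat \<Rightarrow> msector \<Rightarrow> 3 \<Rightarrow> msector" where
  "Estar eps \<Lambda> m \<psi> j xi ks s =
     complex_of_real (1 / sqrt (real (Suc m))) *
     (\<Sum>i<Suc m. cnj (Hvec eps \<Lambda> (snd (ks i)) (fst (ks i)) $ j) *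
                 \<psi> (xi + fst (ks i)) (remove_at m i ks) s)"

definition sigmaEstar :: "(nat \<Rightarrow> real^3 \<Rightarrow> real^3) \<Rightarrow> real \<Rightarrow> nat \<Rightarrow> msector \<Rightarrow> msector" where
  "sigmaEstar eps \<Lambda> m \<psi> xi ks s =
     (\<Sum>j\<in>UNIV. \<Sum>t<2. pauli j s t * Estar eps \<Lambda> m \<psi> j xi ks t)"

definition sector_vector :: "nat \<Rightarrow> msector \<Rightarrow> bool" where
  "sector_vector m \<psi> \<longleftrightarrow>
     (\<forall>s<2. (\<lambda>(xi, ks). \<psi> xi ks s) \<in> borel_measurable (lborel \<Otimes>\<^sub>M photons m)) \<and>
     (\<integral>\<^sup>+ xi. (\<integral>\<^sup>+ ks. (\<Sum>s<2. ennreal ((cmod (\<psi> xi ks s))\<^sup>2)) \<partial>photons m) \<partial>lborel) < \<infinity> \<and>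
     (\<forall>\<pi> xi ks s. \<pi> permutes {..<m} \<longrightarrow> \<psi> xi (\<lambda>i. ks (\<pi> i)) s = \<psi> xi ks s)"

definition norm_sq :: "nat \<Rightarrow> msector \<Rightarrow> ennreal" where
  "norm_sq m \<psi> = (\<integral>\<^sup>+ xi. (\<integral>\<^sup>+ ks. (\<Sum>s<2. ennreal ((cmod (\<psi> xi ks s))\<^sup>2)) \<partial>photons m) \<partial>lborel)"

definition p_norm_sq :: "nat \<Rightarrow> msector \<Rightarrow> ennreal" where
  "p_norm_sq m \<psi> = (\<integral>\<^sup>+ xi. (\<integral>\<^sup>+ ks.
      (\<Sum>s<2. ennreal ((norm xi)\<^sup>2 * (cmod (\<psi> xi ks s))\<^sup>2)) \<partial>photons m) \<partial>lborel)"

definition Hf_form :: "nat \<Rightarrow> msector \<Rightarrow> ennreal" where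
  "Hf_form m \<psi> = (\<integral>\<^sup>+ xi. (\<integral>\<^sup>+ ks.
      (\<Sum>s<2. ennreal ((\<Sum>i<m. norm (fst (ks i))) * (cmod (\<psi> xi ks s))\<^sup>2)) \<partial>photons m) \<partial>lborel)"

definition resolvent_form :: "nat \<Rightarrow> msector \<Rightarrow> ennreal" where
  "resolvent_form n \<phi> = (\<integral>\<^sup>+ xi. (\<integral>\<^sup>+ ks.
      (\<Sum>s<2. ennreal ((cmod (\<phi> xi ks s))\<^sup>2 / ((norm xi)\<^sup>2 + (\<Sum>i<n. norm (fst (ks i))))))
      \<partial>photons n) \<partial>lborel)"

definition epsE :: "(nat \<Rightarrow> real^3 \<Rightarrow> real^3) \<Rightarrow> real \<Rightarrow> ennreal" where
  "epsE eps \<Lambda> = (\<Sum>l\<in>{1,2}. \<integral>\<^sup>+ k. ennreal ((norm (Hvec eps \<Lambda> l k))\<^sup>2 / ((norm k)\<^sup>2 + norm k)) \<partial>lborel)"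

end

theory Submission
  imports Defs
begin

lemma distr_PiM_reindex_sf:
  fixes M :: "'a measure" and f :: "'i \<Rightarrow> 'j"
  assumes sf: "sigma_finite_measure M" and fin: "finite I" and bij: "bij_betw f I J"
  shows "distr (PiM J (\<lambda>_. M)) (PiM I (\<lambda>_. M)) (\<lambda>\<omega>. \<lambda>n\<in>I. \<omega> (f n)) = PiM I (\<lambda>_. M)"
proof -
  interpret product_sigma_finite "\<lambda>_::'i. M" unfolding product_sigma_finite_def using sf by simp
  interpret J: product_sigma_finite "\<lambda>_::'j. M" unfolding product_sigma_finite_def using sf by simp
  have finJ: "finite J" using bij fin bij_betw_finite by blast
  have meas: "(\<lambda>\<omega>. \<lambda>n\<in>I. \<omega> (f n)) \<in> measurable (PiM J (\<lambda>_. M)) (PiM I (\<lambda>_. M))"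
    using bij by (intro measurable_restrict measurable_component_singleton) (auto simp: bij_betw_def)
  show ?thesis
  proof (rule PiM_eqI[OF fin])
    show "sets (distr (PiM J (\<lambda>_. M)) (PiM I (\<lambda>_. M)) (\<lambda>\<omega>. \<lambda>n\<in>I. \<omega> (f n))) = sets (PiM I (\<lambda>_. M))"
      by simp
    fix A assume A: "\<And>i. i \<in> I \<Longrightarrow> A i \<in> sets M"
    let ?g = "the_inv_into I f"
    have gI: "\<And>j. j \<in> J \<Longrightarrow> ?g j \<in> I" using bij
      by (metis bij_betw_def the_inv_into_into order_refl)
    have fg: "\<And>j. j \<in> J \<Longrightarrow> f (?g j) = j" using bij
      by (simp add: bij_betw_def f_the_inv_into_f)
    have gf: "\<And>i. i \<in> I \<Longrightarrow> ?g (f i) = i" using bij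
      by (simp add: bij_betw_def the_inv_into_f_f)
    have fI: "\<And>i. i \<in> I \<Longrightarrow> f i \<in> J" using bij by (auto simp: bij_betw_def)
    have set_eq: "(\<lambda>\<omega>. \<lambda>n\<in>I. \<omega> (f n)) -` Pi\<^sub>E I A \<inter> space (PiM J (\<lambda>_. M)) = Pi\<^sub>E J (\<lambda>j. A (?g j))"
    proof (intro set_eqI iffI)
      fix \<omega> assume "\<omega> \<in> (\<lambda>\<omega>. \<lambda>n\<in>I. \<omega> (f n)) -` Pi\<^sub>E I A \<inter> space (PiM J (\<lambda>_. M))"
      then show "\<omega> \<in> Pi\<^sub>E J (\<lambda>j. A (?g j))"
        using gI fg by (fastforce simp: space_PiM PiE_def Pi_def extensional_def)
    next
      fix \<omega> assume w: "\<omega> \<in> Pi\<^sub>E J (\<lambda>j. A (?g j))"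
      have "\<omega> \<in> space (PiM J (\<lambda>_. M))"
        using w A gI sets.sets_into_space by (fastforce simp: space_PiM PiE_def Pi_def)
      moreover have "(\<lambda>n\<in>I. \<omega> (f n)) \<in> Pi\<^sub>E I A"
        using w fI gf by (fastforce simp: PiE_def Pi_def)
      ultimately show "\<omega> \<in> (\<lambda>\<omega>. \<lambda>n\<in>I. \<omega> (f n)) -` Pi\<^sub>E I A \<inter> space (PiM J (\<lambda>_. M))" by simp
    qed
    have "emeasure (distr (PiM J (\<lambda>_. M)) (PiM I (\<lambda>_. M)) (\<lambda>\<omega>. \<lambda>n\<in>I. \<omega> (f n))) (Pi\<^sub>E I A)
        = emeasure (PiM J (\<lambda>_. M)) ((\<lambda>\<omega>. \<lambda>n\<in>I. \<omega> (f n)) -` Pi\<^sub>E I A \<inter> space (PiM J (\<lambda>_. M)))"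
      using A by (intro emeasure_distr meas sets_PiM_I_finite fin) auto
    also have "\<dots> = (\<Prod>j\<in>J. emeasure M (A (?g j)))"
      unfolding set_eq using A gI by (intro J.emeasure_PiM finJ) auto
    also have "\<dots> = (\<Prod>i\<in>I. emeasure M (A i))"
      using bij gf by (intro prod.reindex_bij_betw[symmetric, where h=f, THEN trans]) (auto intro!: prod.cong)
    finally show "emeasure (distr (PiM J (\<lambda>_. M)) (PiM I (\<lambda>_. M)) (\<lambda>\<omega>. \<lambda>n\<in>I. \<omega> (f n))) (Pi\<^sub>E I A) = (\<Prod>i\<in>I. emeasure M (A i))" .
  qed
qed


lemma sf_photon: "sigma_finite_measure photon_measure"
  unfolding photon_measure_def
  by (intro sigma_finite_pair_measure sigma_finite_lborel sigma_finite_measure_count_space_finite) auto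

lemma remove_at_upd:
  assumes "i < Suc m"
  shows "remove_at m i (x(i := y)) = (\<lambda>j\<in>{..<m}. x (if j < i then j else Suc j))"
  using assms by (auto simp: remove_at_def fun_eq_iff)

lemma bij_shift:
  assumes "i < Suc m"
  shows "bij_betw (\<lambda>j. if j < i then j else Suc j) {..<m} ({..<Suc m} - {i})"
proof (rule bij_betw_imageI)
  show "inj_on (\<lambda>j. if j < i then j else Suc j) {..<m}"
    by (auto simp: inj_on_def split: if_splits)
  show "(\<lambda>j. if j < i then j else Suc j) ` {..<m} = {..<Suc m} - {i}"
  proof (intro set_eqI iffI)
    fix x assume "x \<in> {..<Suc m} - {i}"
    then show "x \<in> (\<lambda>j. if j < i then j else Suc j) ` {..<m}"
    proof (cases "x < i")
      case True then show ?thesis using assms by (intro image_eqI[where x=x]) auto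
    next
      case False
      then have "x = Suc (x - 1)" "x - 1 < m" "\<not> x - 1 < i" using \<open>x \<in> {..<Suc m} - {i}\<close> by auto
      then show ?thesis by (intro image_eqI[where x="x - 1"]) auto
    qed
  qed (use assms in auto)
qed

lemma nn_integral_remove_at:
  assumes i: "i < Suc m"
    and F[measurable]: "(\<lambda>p. F (fst p) (snd p)) \<in> borel_measurable (photon_measure \<Otimes>\<^sub>M photons m)"
  shows "(\<integral>\<^sup>+ks. F (ks i) (remove_at m i ks) \<partial>photons (Suc m))
       = (\<integral>\<^sup>+K. (\<integral>\<^sup>+y. F y K \<partial>photon_measure) \<partial>photons m)"
proof -
  interpret product_sigma_finite "\<lambda>_::nat. photon_measure"
    unfolding product_sigma_finite_def using sf_photon by simp
  interpret P: pair_sigma_finite photon_measure "photons m"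
    unfolding pair_sigma_finite_def photons_def
    using sf_photon by (auto intro!: sigma_finite)
  define I where "I = {..<Suc m} - {i}"
  define \<rho> where "\<rho> = (\<lambda>j::nat. if j < i then j else Suc j)"
  have ins: "{..<Suc m} = insert i I" using i by (auto simp: I_def)
  have iI: "i \<notin> I" "finite I" by (auto simp: I_def)
  have rem_meas: "(\<lambda>ks. remove_at m i ks) \<in> measurable (photons (Suc m)) (photons m)"
  proof -
    have "(\<lambda>ks. remove_at m i ks) = (\<lambda>ks. \<lambda>j\<in>{..<m}. ks (\<rho> j))"
      by (auto simp: remove_at_def \<rho>_def fun_eq_iff)
    also have "\<dots> \<in> measurable (photons (Suc m)) (photons m)"
      unfolding photons_def using i
      by (intro measurable_restrict measurable_component_singleton) (auto simp: \<rho>_def)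
    finally show ?thesis .
  qed
  have f_meas: "(\<lambda>ks. F (ks i) (remove_at m i ks)) \<in> borel_measurable (PiM (insert i I) (\<lambda>_. photon_measure))"
  proof -
    have "(\<lambda>ks. (ks i, remove_at m i ks)) \<in> measurable (photons (Suc m)) (photon_measure \<Otimes>\<^sub>M photons m)"
      using rem_meas i unfolding photons_def
      by (intro measurable_Pair measurable_component_singleton) auto
    from measurable_compose[OF this F] show ?thesis
      unfolding photons_def ins[symmetric] by simp
  qed
  have R_meas: "(\<lambda>x. \<lambda>j\<in>{..<m}. x (\<rho> j)) \<in> measurable (PiM I (\<lambda>_. photon_measure)) (PiM {..<m} (\<lambda>_. photon_measure))"
      using i by (intro measurable_restrict measurable_component_singleton) (auto simp: \<rho>_def I_def)
  have G_meas: "(\<lambda>K. \<integral>\<^sup>+y. F y K \<partial>photon_measure) \<in> borel_measurable (PiM {..<m} (\<lambda>_. photon_measure))"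
  proof -
    have "(\<lambda>p. F (snd p) (fst p)) \<in> borel_measurable (photons m \<Otimes>\<^sub>M photon_measure)"
      using measurable_compose[OF measurable_Pair[OF measurable_snd measurable_fst] F] by simp
    then show ?thesis
      using sigma_finite_measure.borel_measurable_nn_integral[OF sf_photon, of "\<lambda>K y. F y K" "photons m"]
      unfolding photons_def by (simp add: case_prod_beta')
  qed
  have "(\<integral>\<^sup>+ks. F (ks i) (remove_at m i ks) \<partial>photons (Suc m))
      = (\<integral>\<^sup>+x. (\<integral>\<^sup>+y. F ((x(i := y)) i) (remove_at m i (x(i := y))) \<partial>photon_measure) \<partial>PiM I (\<lambda>_. photon_measure))"
    unfolding photons_def ins using f_meas
    by (subst product_nn_integral_insert[OF iI(2) iI(1)]) simp_all
  also have "\<dots> = (\<integral>\<^sup>+x. (\<integral>\<^sup>+y. F y (\<lambda>j\<in>{..<m}. x (\<rho> j)) \<partial>photon_measure) \<partial>PiM I (\<lambda>_. photon_measure))"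
    using i by (simp add: remove_at_upd \<rho>_def)
  also have "\<dots> = (\<integral>\<^sup>+K. (\<integral>\<^sup>+y. F y K \<partial>photon_measure) \<partial>distr (PiM I (\<lambda>_. photon_measure)) (PiM {..<m} (\<lambda>_. photon_measure)) (\<lambda>x. \<lambda>j\<in>{..<m}. x (\<rho> j)))"
    using G_meas by (subst nn_integral_distr[OF R_meas]) (simp_all cong: measurable_cong_sets)
  also have "distr (PiM I (\<lambda>_. photon_measure)) (PiM {..<m} (\<lambda>_. photon_measure)) (\<lambda>x. \<lambda>j\<in>{..<m}. x (\<rho> j)) = photons m"
    unfolding photons_def using i
    by (intro distr_PiM_reindex_sf sf_photon) (auto simp: I_def \<rho>_def bij_shift)
  finally show ?thesis .
qed


lemma exists_dyadic:
  fixes L r :: real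
  assumes r: "0 < r" "r \<le> L"
  shows "\<exists>j::nat. r \<le> L / 2^j \<and> L / 2^(Suc j) < r"
proof -
  have L: "L > 0" using r by simp
  obtain n :: nat where n: "L / r < real n" using reals_Archimedean2 by blast
  have "real n < (2::real) ^ n" by (rule of_nat_less_two_power)
  moreover have "(0::real) \<le> 2 ^ n" by simp
  ultimately have "real n < 2 * 2 ^ n" by linarith
  with n have "L / r < 2^(Suc n)" by simp
  then have ex: "L / 2^(Suc n) < r" using r L by (simp add: field_simps)
  define j where "j = (LEAST j. L / 2^(Suc j) < r)"
  have jP: "L / 2^(Suc j) < r" unfolding j_def by (rule LeastI[of "\<lambda>j. L / 2^(Suc j) < r", OF ex])
  have "r \<le> L / 2^j"
  proof (cases j)
    case 0 then show ?thesis using r by simp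
  next
    case (Suc j')
    have "\<not> L / 2^(Suc j') < r"
      using not_less_Least[of j' "\<lambda>j. L / 2^(Suc j) < r"] Suc unfolding j_def by simp
    then show ?thesis using Suc by simp
  qed
  with jP show ?thesis by blast
qed

lemma dyadic_bound:
  fixes L :: real assumes L: "L > 0"
  shows "(\<integral>\<^sup>+k. ennreal (indicator (cball (0::real^3) L) k / (norm k)\<^sup>2) \<partial>lborel)
          \<le> ennreal (8 * unit_ball_vol 3 * L)"
proof -
  define V where "V = unit_ball_vol 3"
  have V: "V > 0" unfolding V_def by simp
  define g where "g j k = ennreal (4^(Suc j) / L\<^sup>2) * indicator (cball (0::real^3) (L / 2^j)) k" for j :: nat and k
  have pt: "ennreal (indicator (cball (0::real^3) L) k / (norm k)\<^sup>2) \<le> (\<Sum>j. g j k)" for k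
  proof (cases "k = 0 \<or> norm k > L")
    case True then show ?thesis by (auto simp: indicator_def)
  next
    case False
    then have k: "0 < norm k" "norm k \<le> L" by auto
    obtain j :: nat where j: "norm k \<le> L / 2^j" "L / 2^(Suc j) < norm k"
      using exists_dyadic[OF k] by blast
    have "1 / (norm k)\<^sup>2 \<le> 4^(Suc j) / L\<^sup>2"
    proof -
      have "L < 2^(Suc j) * norm k" using j(2) by (simp add: field_simps)
      then have "L\<^sup>2 \<le> (2^(Suc j) * norm k)\<^sup>2" using L by (intro power_mono) auto
      also have "\<dots> = ((2::real)^(Suc j))\<^sup>2 * (norm k)\<^sup>2" by (simp add: power_mult_distrib)
      also have "((2::real)^(Suc j))\<^sup>2 = 4^(Suc j)" by (simp add: power2_eq_square flip: power_mult_distrib)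
      finally show ?thesis using k L by (simp add: field_simps)
    qed
    then have "ennreal (indicator (cball (0::real^3) L) k / (norm k)\<^sup>2) \<le> g j k"
      using k j by (simp add: g_def indicator_def)
    also have "g j k \<le> (\<Sum>j. g j k)" using sum_le_suminf[OF summableI, of "{j}" "\<lambda>j. g j k"] by simp
    finally show ?thesis .
  qed
  have "(\<integral>\<^sup>+k. ennreal (indicator (cball (0::real^3) L) k / (norm k)\<^sup>2) \<partial>lborel) \<le> (\<integral>\<^sup>+k. (\<Sum>j. g j k) \<partial>lborel)"
    by (intro nn_integral_mono pt)
  also have "\<dots> = (\<Sum>j. \<integral>\<^sup>+k. g j k \<partial>lborel)"
    by (rule nn_integral_suminf) (auto simp: g_def intro!: borel_measurable_times_ennreal borel_measurable_indicator)
  also have "\<dots> = (\<Sum>j. ennreal (4 * V * L * (1/2)^j))"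
  proof (rule suminf_cong)
    fix j :: nat
    have "(\<integral>\<^sup>+k. g j k \<partial>lborel) = ennreal (4^(Suc j) / L\<^sup>2) * emeasure lborel (cball (0::real^3) (L / 2^j))"
      unfolding g_def by (rule nn_integral_cmult_indicator) simp
    also have "\<dots> = ennreal (4^(Suc j) / L\<^sup>2) * ennreal (V * (L / 2^j)^3)"
      using L by (subst emeasure_cball) (simp_all add: V_def)
    also have "\<dots> = ennreal (4 * V * L * (1/2)^j)"
    proof -
      have e: "(4::real)^j = (2^j)^2" by (simp add: power2_eq_square flip: power_mult_distrib)
      have "4^(Suc j) / L\<^sup>2 * (V * (L / 2^j)^3) = 4 * V * L * (1/2)^j"
        using L by (simp add: e field_simps power_divide) (simp add: power2_eq_square power3_eq_cube)
      then show ?thesis using L V by (subst ennreal_mult[symmetric]) auto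
    qed
    finally show "(\<integral>\<^sup>+k. g j k \<partial>lborel) = ennreal (4 * V * L * (1/2)^j)" .
  qed
  also have "\<dots> = ennreal (8 * V * L)"
  proof -
    have "(\<lambda>j. 4 * V * L * (1/2::real)^j) sums (4 * V * L * (1 / (1 - 1/2)))"
      by (intro sums_mult geometric_sums) simp
    then have sm: "(\<lambda>j. 4 * V * L * (1/2::real)^j) sums (8 * V * L)" by (simp add: mult.assoc)
    then show ?thesis using V L by (subst suminf_ennreal2) (auto simp: sums_iff)
  qed
  finally show ?thesis by (simp add: V_def)
qed


lemma norm_sq_vec: "(norm (x :: 'a::real_normed_vector ^ 'n))\<^sup>2 = (\<Sum>j\<in>UNIV. (norm (x $ j))\<^sup>2)"
  unfolding norm_vec_def L2_set_def by (simp add: sum_nonneg)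

lemma Hn_formula:
  assumes pol: "polarization eps" and l: "l \<in> {1,2}"
  shows "(norm (Hvec eps \<Lambda> l k))\<^sup>2 = (if norm k \<le> \<Lambda> then norm k / (4 * pi\<^sup>2) else 0)"
proof -
  define \<alpha> where "\<alpha> = cutoff \<Lambda> (norm k) / (2 * pi * sqrt (norm k))"
  define c where "c = cross3 k (eps l k)"
  have "(norm (Hvec eps \<Lambda> l k))\<^sup>2 = (\<Sum>j\<in>UNIV. (\<alpha> * c $ j)\<^sup>2)"
  proof -
    have h: "cmod (- \<i> * complex_of_real x) = \<bar>x\<bar>" for x by (simp add: norm_mult)
    show ?thesis unfolding norm_sq_vec Hvec_def \<alpha>_def c_def
      by (intro sum.cong refl) (simp only: vec_lambda_beta h power2_abs)
  qed
  also have "\<dots> = \<alpha>\<^sup>2 * (norm c)\<^sup>2"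
    by (simp add: norm_sq_vec power_mult_distrib sum_distrib_left)
  also have "\<dots> = (if norm k \<le> \<Lambda> then norm k / (4 * pi\<^sup>2) else 0)"
  proof (cases "k = 0")
    case True then show ?thesis by (simp add: c_def)
  next
    case False
    have u: "norm (eps l k) = 1" and o: "inner k (eps l k) = 0"
      using pol False l unfolding polarization_def by auto
    have "(norm c)\<^sup>2 = (norm k)\<^sup>2"
      using norm_cross[of k "eps l k"] u o unfolding c_def by simp
    moreover have "\<alpha>\<^sup>2 = (if norm k \<le> \<Lambda> then 1 / (4 * pi\<^sup>2 * norm k) else 0)"
      using False unfolding \<alpha>_def cutoff_def by (simp add: power_divide power_mult_distrib)
    ultimately show ?thesis using False by (simp add: power2_eq_square)
  qed
  finally show ?thesis .
qed

lemma key_real: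
  fixes a b q r e :: real
  assumes r: "r > 0" and q: "q \<ge> r" and e: "e \<ge> 0" and a: "a = q + e"
    and m: "a - b \<ge> r" and p: "a + b \<ge> r" and b2: "b\<^sup>2 \<le> 4 * e * r\<^sup>2"
    and P: "(a - b) * (a + b) \<ge> r * q"
  shows "1 / (a - b) + 1 / (a + b) \<le> 2 / q + 8 * e * r / q\<^sup>2"
proof -
  define P where "P = (a - b) * (a + b)"
  have Ppos: "P > 0" using P r q unfolding P_def by (smt (verit) mult_pos_pos)
  have qpos: "q > 0" using r q by simp
  have lhs: "1 / (a - b) + 1 / (a + b) = 2 * a / P"
    using m p r unfolding P_def by (simp add: field_simps)
  have P2: "P = a\<^sup>2 - b\<^sup>2" unfolding P_def by (simp add: power2_eq_square algebra_simps)
  have "2 * a * q\<^sup>2 \<le> 2 * q * P + 8 * e * r * P"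
  proof -
    have "2 * a * q\<^sup>2 - 2 * q * P = 2 * q * (b\<^sup>2 - a * e)"
      unfolding P2 a by (simp add: power2_eq_square algebra_simps)
    also have "\<dots> \<le> 2 * q * (4 * e * r\<^sup>2)"
    proof -
      have "a * e \<ge> 0" using a q r e by simp
      then have "b\<^sup>2 - a * e \<le> 4 * e * r\<^sup>2" using b2 by linarith
      then show ?thesis using qpos by (intro mult_left_mono) auto
    qed
    also have "\<dots> = 8 * e * r * (r * q)" by (simp add: power2_eq_square)
    also have "\<dots> \<le> 8 * e * r * P"
      using P e r unfolding P_def by (intro mult_left_mono) auto
    finally show ?thesis by simp
  qed
  then have "2 * a / P \<le> (2 * q * P + 8 * e * r * P) / (P * q\<^sup>2)"
    using Ppos qpos by (simp add: field_simps)
  also have "\<dots> = 2 / q + 8 * e * r / q\<^sup>2"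
    using Ppos qpos by (simp add: field_simps power2_eq_square)
  finally show ?thesis using lhs by simp
qed

lemma key_vec:
  fixes k eta :: "real^3"
  assumes k: "k \<noteq> 0"
  shows "1 / ((norm (eta - k))\<^sup>2 + norm k) + 1 / ((norm (eta + k))\<^sup>2 + norm k)
     \<le> 2 / ((norm k)\<^sup>2 + norm k) + 8 * (norm eta)\<^sup>2 * norm k / ((norm k)\<^sup>2 + norm k)\<^sup>2"
proof -
  define r where "r = norm k"
  define e where "e = (norm eta)\<^sup>2"
  define q where "q = r\<^sup>2 + r"
  define a where "a = q + e"
  define b where "b = 2 * inner eta k"
  have r: "r > 0" using k by (simp add: r_def)
  have dm: "(norm (eta - k))\<^sup>2 + norm k = a - b"
    unfolding a_def b_def q_def e_def r_def by (simp add: power2_norm_eq_inner inner_diff_left inner_diff_right inner_commute)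
  have dp: "(norm (eta + k))\<^sup>2 + norm k = a + b"
    unfolding a_def b_def q_def e_def r_def by (simp add: power2_norm_eq_inner inner_add_left inner_add_right inner_commute)
  have m: "a - b \<ge> r" using dm r_def by (metis le_add_same_cancel2 zero_le_power2)
  have p: "a + b \<ge> r" using dp r_def by (metis le_add_same_cancel2 zero_le_power2)
  have b2: "b\<^sup>2 \<le> 4 * e * r\<^sup>2"
  proof -
    have "\<bar>inner eta k\<bar> \<le> norm eta * norm k" by (rule Cauchy_Schwarz_ineq2)
    then have "(inner eta k)\<^sup>2 \<le> (norm eta * norm k)\<^sup>2" by (metis abs_ge_zero power2_abs power_mono)
    then show ?thesis unfolding b_def e_def r_def by (simp add: power_mult_distrib)
  qed
  have q: "q \<ge> r" unfolding q_def by simp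
  have e: "e \<ge> 0" unfolding e_def by simp
  have P: "(a - b) * (a + b) \<ge> r * q"
  proof (cases "b \<ge> 0")
    case True
    then have "a + b \<ge> q" using e unfolding a_def by simp
    then show ?thesis using m r q by (metis mult_mono less_imp_le order_trans)
  next
    case False
    then have "a - b \<ge> q" using e unfolding a_def by simp
    then have "(a - b) * (a + b) \<ge> q * r" using p r q by (metis mult_mono less_imp_le order_trans)
    then show ?thesis by (simp add: mult.commute)
  qed
  have "1 / (a - b) + 1 / (a + b) \<le> 2 / q + 8 * e * r / q\<^sup>2"
    by (rule key_real[OF r q e _ m p b2 P]) (simp add: a_def)
  then show ?thesis unfolding dm[symmetric] dp[symmetric] q_def e_def r_def by simp
qed


definition hh :: "real \<Rightarrow> real^3 \<Rightarrow> real" where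
  "hh \<Lambda> k = (if norm k \<le> \<Lambda> then norm k / (4 * pi\<^sup>2) else 0)"

lemma hh_nonneg: "hh \<Lambda> k \<ge> 0" by (simp add: hh_def)

lemma hh_meas[measurable]: "hh \<Lambda> \<in> borel_measurable borel"
  unfolding hh_def by measurable

lemma hh_minus[simp]: "hh \<Lambda> (-k) = hh \<Lambda> k" by (simp add: hh_def)

lemma lborel_reflect: "distr lborel borel uminus = (lborel :: (real^3) measure)"
proof -
  have "(lborel :: (real^3) measure) = density (distr lborel borel (\<lambda>x. 0 + (-1) *\<^sub>R x)) (\<lambda>_. \<bar>-1::real\<bar>^DIM(real^3))"
    by (rule lborel_affine) simp
  then show ?thesis by (simp add: density_1)
qed

lemma nn_integral_reflect3:
  assumes [measurable]: "f \<in> borel_measurable (borel :: (real^3) measure)"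
  shows "(\<integral>\<^sup>+k. f k \<partial>lborel) = (\<integral>\<^sup>+k. f (-k) \<partial>lborel)"
proof -
  have "(\<integral>\<^sup>+k. f k \<partial>lborel) = (\<integral>\<^sup>+k. f k \<partial>distr lborel borel uminus)"
    by (simp add: lborel_reflect)
  also have "\<dots> = (\<integral>\<^sup>+k. f (-k) \<partial>lborel)"
    by (subst nn_integral_distr) auto
  finally show ?thesis .
qed

lemma pointwise_A:
  fixes k eta :: "real^3"
  assumes L: "\<Lambda> > 0"
  shows "hh \<Lambda> k / ((norm (eta - k))\<^sup>2 + norm k) + hh \<Lambda> k / ((norm (eta + k))\<^sup>2 + norm k)
    \<le> 2 * (hh \<Lambda> k / ((norm k)\<^sup>2 + norm k)) + 2 / pi\<^sup>2 * (norm eta)\<^sup>2 * (indicator (cball 0 \<Lambda>) k / (norm k)\<^sup>2)"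
proof (cases "k = 0 \<or> norm k > \<Lambda>")
  case True then show ?thesis by (auto simp: hh_def indicator_def)
next
  case False
  then have k: "k \<noteq> 0" "norm k \<le> \<Lambda>" by auto
  define r where "r = norm k"
  define q where "q = r\<^sup>2 + r"
  define e where "e = (norm eta)\<^sup>2"
  have r: "r > 0" using k by (simp add: r_def)
  have h: "hh \<Lambda> k = r / (4 * pi\<^sup>2)" using k by (simp add: hh_def r_def)
  have hpos: "hh \<Lambda> k \<ge> 0" by (rule hh_nonneg)
  have "hh \<Lambda> k / ((norm (eta - k))\<^sup>2 + norm k) + hh \<Lambda> k / ((norm (eta + k))\<^sup>2 + norm k)
      = hh \<Lambda> k * (1 / ((norm (eta - k))\<^sup>2 + norm k) + 1 / ((norm (eta + k))\<^sup>2 + norm k))"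
    by (simp add: field_simps)
  also have "\<dots> \<le> hh \<Lambda> k * (2 / q + 8 * e * r / q\<^sup>2)"
    using key_vec[OF k(1), of eta] hpos unfolding q_def e_def r_def by (intro mult_left_mono) auto
  also have "\<dots> = 2 * (hh \<Lambda> k / q) + 8 * e * (r / (4 * pi\<^sup>2)) * r / q\<^sup>2"
    unfolding h by (simp add: field_simps)
  also have "8 * e * (r / (4 * pi\<^sup>2)) * r / q\<^sup>2 \<le> 2 / pi\<^sup>2 * e * (1 / r\<^sup>2)"
  proof -
    have qr: "q\<^sup>2 \<ge> r\<^sup>2 * r\<^sup>2" unfolding q_def using r
      by (simp add: power2_eq_square algebra_simps mult_mono)
    have "8 * e * (r / (4 * pi\<^sup>2)) * r / q\<^sup>2 = (2 / pi\<^sup>2 * e) * (r\<^sup>2 / q\<^sup>2)"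
      by (simp add: field_simps power2_eq_square)
    also have "\<dots> \<le> (2 / pi\<^sup>2 * e) * (r\<^sup>2 / (r\<^sup>2 * r\<^sup>2))"
    proof -
      have "r\<^sup>2 * r\<^sup>2 > 0" using r by simp
      then have "r\<^sup>2 / q\<^sup>2 \<le> r\<^sup>2 / (r\<^sup>2 * r\<^sup>2)"
        using frac_le[of "r\<^sup>2" "r\<^sup>2" "r\<^sup>2 * r\<^sup>2" "q\<^sup>2"] qr by simp
      then show ?thesis unfolding e_def by (intro mult_left_mono) auto
    qed
    also have "\<dots> = 2 / pi\<^sup>2 * e * (1 / r\<^sup>2)" using r by (simp add: field_simps)
    finally show ?thesis .
  qed
  finally show ?thesis using k unfolding q_def e_def r_def by (simp add: indicator_def)
qed


lemma lemmaA:
  assumes L: "\<Lambda> > 0"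
  shows "(\<integral>\<^sup>+k. ennreal (hh \<Lambda> k / ((norm (eta - k))\<^sup>2 + norm k)) \<partial>lborel)
     \<le> (\<integral>\<^sup>+k. ennreal (hh \<Lambda> k / ((norm k)\<^sup>2 + norm k)) \<partial>lborel)
        + ennreal (8 * unit_ball_vol 3 / pi\<^sup>2 * \<Lambda> * (norm eta)\<^sup>2)"
proof -
  have [measurable]: "cball (0::real^3) \<Lambda> \<in> sets borel" by simp
  define V where "V = unit_ball_vol 3"
  have V: "V > 0" unfolding V_def by simp
  define c where "c = 2 / pi\<^sup>2 * (norm eta)\<^sup>2"
  have c: "c \<ge> 0" unfolding c_def by simp
  define F where "F k = ennreal (hh \<Lambda> k / ((norm (eta - k))\<^sup>2 + norm k))" for k
  define G where "G k = ennreal (hh \<Lambda> k / ((norm (eta + k))\<^sup>2 + norm k))" for k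
  define Q where "Q = (\<integral>\<^sup>+k. ennreal (hh \<Lambda> k / ((norm k)\<^sup>2 + norm k)) \<partial>lborel)"
  have Fm[measurable]: "F \<in> borel_measurable borel" unfolding F_def by measurable
  have Gm[measurable]: "G \<in> borel_measurable borel" unfolding G_def by measurable
  have FG: "(\<integral>\<^sup>+k. F k \<partial>lborel) = (\<integral>\<^sup>+k. G k \<partial>lborel)"
    by (subst nn_integral_reflect3[OF Fm]) (simp add: F_def G_def[abs_def])
  have "(\<integral>\<^sup>+k. F k \<partial>lborel) + (\<integral>\<^sup>+k. G k \<partial>lborel) = (\<integral>\<^sup>+k. F k + G k \<partial>lborel)"
    by (rule nn_integral_add[symmetric]) auto
  also have "\<dots> \<le> (\<integral>\<^sup>+k. ennreal (2 * (hh \<Lambda> k / ((norm k)\<^sup>2 + norm k))) + ennreal c * ennreal (indicator (cball 0 \<Lambda>) k / (norm k)\<^sup>2) \<partial>lborel)"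
  proof (rule nn_integral_mono)
    fix k :: "real^3"
    have "F k + G k = ennreal (hh \<Lambda> k / ((norm (eta - k))\<^sup>2 + norm k) + hh \<Lambda> k / ((norm (eta + k))\<^sup>2 + norm k))"
      unfolding F_def G_def by (intro ennreal_plus[symmetric] divide_nonneg_nonneg hh_nonneg) auto
    also have "\<dots> \<le> ennreal (2 * (hh \<Lambda> k / ((norm k)\<^sup>2 + norm k)) + c * (indicator (cball 0 \<Lambda>) k / (norm k)\<^sup>2))"
      using pointwise_A[OF L, of k eta] unfolding c_def by (intro ennreal_leI) (simp add: mult.assoc)
    also have "\<dots> = ennreal (2 * (hh \<Lambda> k / ((norm k)\<^sup>2 + norm k))) + ennreal (c * (indicator (cball 0 \<Lambda>) k / (norm k)\<^sup>2))"
      using c by (intro ennreal_plus) (auto simp: hh_nonneg)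
    also have "ennreal (c * (indicator (cball 0 \<Lambda>) k / (norm k)\<^sup>2)) = ennreal c * ennreal (indicator (cball 0 \<Lambda>) k / (norm k)\<^sup>2)"
      using c by (intro ennreal_mult) auto
    finally show "F k + G k \<le> ennreal (2 * (hh \<Lambda> k / ((norm k)\<^sup>2 + norm k))) + ennreal c * ennreal (indicator (cball 0 \<Lambda>) k / (norm k)\<^sup>2)" .
  qed
  also have "\<dots> = (\<integral>\<^sup>+k. ennreal (2 * (hh \<Lambda> k / ((norm k)\<^sup>2 + norm k))) \<partial>lborel) + ennreal c * (\<integral>\<^sup>+k. ennreal (indicator (cball (0::real^3) \<Lambda>) k / (norm k)\<^sup>2) \<partial>lborel)"
    by (subst nn_integral_add) (auto intro!: nn_integral_cmult)
  also have "(\<integral>\<^sup>+k. ennreal (2 * (hh \<Lambda> k / ((norm k)\<^sup>2 + norm k))) \<partial>lborel) = 2 * Q"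
    unfolding Q_def by (subst ennreal_mult) (auto intro!: nn_integral_cmult simp: hh_nonneg)
  also have "ennreal c * (\<integral>\<^sup>+k. ennreal (indicator (cball (0::real^3) \<Lambda>) k / (norm k)\<^sup>2) \<partial>lborel) \<le> ennreal c * ennreal (8 * V * \<Lambda>)"
    using dyadic_bound[OF L] unfolding V_def by (intro mult_left_mono) auto
  also have "ennreal c * ennreal (8 * V * \<Lambda>) = 2 * ennreal (8 * V / pi\<^sup>2 * \<Lambda> * (norm eta)\<^sup>2)"
  proof -
    have "ennreal c * ennreal (8 * V * \<Lambda>) = ennreal (c * (8 * V * \<Lambda>))"
      using c V L by (intro ennreal_mult[symmetric]) auto
    also have "c * (8 * V * \<Lambda>) = 2 * (8 * V / pi\<^sup>2 * \<Lambda> * (norm eta)\<^sup>2)"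
      unfolding c_def by (simp add: field_simps)
    also have "ennreal (2 * (8 * V / pi\<^sup>2 * \<Lambda> * (norm eta)\<^sup>2)) = ennreal 2 * ennreal (8 * V / pi\<^sup>2 * \<Lambda> * (norm eta)\<^sup>2)"
      using V L by (intro ennreal_mult) auto
    finally show ?thesis by simp
  qed
  finally have le: "(\<integral>\<^sup>+k. F k \<partial>lborel) + (\<integral>\<^sup>+k. G k \<partial>lborel) \<le> 2 * Q + 2 * ennreal (8 * V / pi\<^sup>2 * \<Lambda> * (norm eta)\<^sup>2)"
    by (metis add_left_mono)
  have e1: "2 * (\<integral>\<^sup>+k. F k \<partial>lborel) = (\<integral>\<^sup>+k. F k \<partial>lborel) + (\<integral>\<^sup>+k. G k \<partial>lborel)"
    unfolding FG by (rule mult_2)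
  have e2: "2 * (Q + ennreal (8 * V / pi\<^sup>2 * \<Lambda> * (norm eta)\<^sup>2)) = 2 * Q + 2 * ennreal (8 * V / pi\<^sup>2 * \<Lambda> * (norm eta)\<^sup>2)"
    by (rule distrib_left)
  have "2 * (\<integral>\<^sup>+k. F k \<partial>lborel) \<le> 2 * (Q + ennreal (8 * V / pi\<^sup>2 * \<Lambda> * (norm eta)\<^sup>2))"
    unfolding e1 e2 by (rule le)
  then have "(\<integral>\<^sup>+k. F k \<partial>lborel) \<le> Q + ennreal (8 * V / pi\<^sup>2 * \<Lambda> * (norm eta)\<^sup>2)"
    by (subst (asm) ennreal_mult_le_mult_iff) auto
  then show ?thesis unfolding F_def Q_def V_def .
qed

lemma lemmaB:
  assumes L: "\<Lambda> > 0"
  shows "(\<integral>\<^sup>+k. ennreal (hh \<Lambda> k / (norm k)\<^sup>2) \<partial>lborel) \<le> ennreal (2 * unit_ball_vol 3 / pi\<^sup>2 * \<Lambda>\<^sup>2)"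
proof -
  have [measurable]: "cball (0::real^3) \<Lambda> \<in> sets borel" by simp
  define c where "c = \<Lambda> / (4 * pi\<^sup>2)"
  have c: "c \<ge> 0" using L by (simp add: c_def)
  have "(\<integral>\<^sup>+k. ennreal (hh \<Lambda> k / (norm k)\<^sup>2) \<partial>lborel) \<le> (\<integral>\<^sup>+k. ennreal c * ennreal (indicator (cball (0::real^3) \<Lambda>) k / (norm k)\<^sup>2) \<partial>lborel)"
  proof (rule nn_integral_mono)
    fix k :: "real^3"
    have "hh \<Lambda> k / (norm k)\<^sup>2 \<le> c * (indicator (cball (0::real^3) \<Lambda>) k / (norm k)\<^sup>2)"
    proof (cases "k = 0 \<or> norm k > \<Lambda>")
      case True then show ?thesis by (auto simp: hh_def indicator_def)
    next
      case False
      then have k: "norm k > 0" "norm k \<le> \<Lambda>" by auto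
      have "hh \<Lambda> k / (norm k)\<^sup>2 = (norm k / (4 * pi\<^sup>2)) / (norm k)\<^sup>2" using k by (simp add: hh_def)
      also have "\<dots> \<le> c / (norm k)\<^sup>2" unfolding c_def using k by (intro divide_right_mono) auto
      finally show ?thesis using k by (simp add: indicator_def)
    qed
    then show "ennreal (hh \<Lambda> k / (norm k)\<^sup>2) \<le> ennreal c * ennreal (indicator (cball (0::real^3) \<Lambda>) k / (norm k)\<^sup>2)"
      using c by (simp add: ennreal_mult[symmetric] ennreal_leI)
  qed
  also have "\<dots> = ennreal c * (\<integral>\<^sup>+k. ennreal (indicator (cball (0::real^3) \<Lambda>) k / (norm k)\<^sup>2) \<partial>lborel)"
    by (rule nn_integral_cmult) auto
  also have "\<dots> \<le> ennreal c * ennreal (8 * unit_ball_vol 3 * \<Lambda>)"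
    using dyadic_bound[OF L] by (intro mult_left_mono) auto
  also have "\<dots> = ennreal (c * (8 * unit_ball_vol 3 * \<Lambda>))"
    using c L by (intro ennreal_mult[symmetric]) auto
  also have "c * (8 * unit_ball_vol 3 * \<Lambda>) = 2 * unit_ball_vol 3 / pi\<^sup>2 * \<Lambda>\<^sup>2"
    unfolding c_def by (simp add: field_simps power2_eq_square)
  finally show ?thesis .
qed


lemma UNIV_3: "(UNIV :: 3 set) = {1, 2, 3}"
  using exhaust_3 by blast

lemma sum_UNIV_3: "(\<Sum>j\<in>(UNIV::3 set). f j) = f 1 + f 2 + f 3"
  unfolding UNIV_3 by (simp add: add.assoc)

lemma sum_lt2: "(\<Sum>t<(2::nat). f t) = f 0 + f 1"
  by (simp add: numeral_2_eq_2)

lemma pauli_norm: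
  fixes v :: "real^3" and p :: "nat \<Rightarrow> complex"
  shows "(\<Sum>s<2. (cmod (\<Sum>j\<in>UNIV. \<Sum>t<2. pauli j s t * (\<i> * complex_of_real (v $ j)) * p t))\<^sup>2)
       = (norm v)\<^sup>2 * (\<Sum>t<2. (cmod (p t))\<^sup>2)"
proof -
  have n: "(norm v)\<^sup>2 = (v$1)\<^sup>2 + (v$2)\<^sup>2 + (v$3)\<^sup>2"
    unfolding norm_vec_def L2_set_def by (simp add: sum_UNIV_3)
  have t3: "(3::3) \<noteq> 1" "(3::3) \<noteq> 2" by simp_all
  have s0: "(\<Sum>j\<in>UNIV. \<Sum>t<2. pauli j 0 t * (\<i> * complex_of_real (v $ j)) * p t)
      = \<i> * v$1 * p 1 + v$2 * p 1 + \<i> * v$3 * p 0"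
    by (simp add: sum_UNIV_3 sum_lt2 pauli_def t3)
  have s1: "(\<Sum>j\<in>UNIV. \<Sum>t<2. pauli j 1 t * (\<i> * complex_of_real (v $ j)) * p t)
      = \<i> * v$1 * p 0 - v$2 * p 0 - \<i> * v$3 * p 1"
    by (simp add: sum_UNIV_3 sum_lt2 pauli_def t3)
  obtain a b c d where ab: "p 0 = Complex a b" and cd: "p 1 = Complex c d"
    by (metis complex.exhaust_sel)
  define v1 v2 v3 where "v1 = v$1" and "v2 = v$2" and "v3 = v$3"
  have "(\<Sum>s<2. (cmod (\<Sum>j\<in>UNIV. \<Sum>t<2. pauli j s t * (\<i> * complex_of_real (v $ j)) * p t))\<^sup>2)
      = (cmod (\<i> * v1 * Complex c d + v2 * Complex c d + \<i> * v3 * Complex a b))\<^sup>2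
        + (cmod (\<i> * v1 * Complex a b - v2 * Complex a b - \<i> * v3 * Complex c d))\<^sup>2"
    by (subst sum_lt2, unfold s0 s1 ab cd v1_def v2_def v3_def, rule refl)
  also have "\<dots> = (- v1 * d + v2 * c - v3 * b)\<^sup>2 + (v1 * c + v2 * d + v3 * a)\<^sup>2
        + (- v1 * b - v2 * a + v3 * d)\<^sup>2 + (v1 * a - v2 * b - v3 * c)\<^sup>2"
    by (simp add: cmod_power2 Complex_eq)
  also have "\<dots> = (v1\<^sup>2 + v2\<^sup>2 + v3\<^sup>2) * ((a\<^sup>2 + b\<^sup>2) + (c\<^sup>2 + d\<^sup>2))"
    by (simp add: power2_eq_square algebra_simps)
  also have "\<dots> = (norm v)\<^sup>2 * (\<Sum>t<2. (cmod (p t))\<^sup>2)"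
    unfolding n sum_lt2 ab cd v1_def v2_def v3_def by (simp add: cmod_power2)
  finally show ?thesis .
qed


lemma l2_tri:
  fixes a :: "nat \<Rightarrow> nat \<Rightarrow> complex"
  assumes "finite I"
  shows "L2_set (\<lambda>s. cmod (\<Sum>i\<in>I. a i s)) S \<le> (\<Sum>i\<in>I. L2_set (\<lambda>s. cmod (a i s)) S)"
  using assms
proof (induction I rule: finite_induct)
  case empty then show ?case by (simp add: L2_set_def)
next
  case (insert x F)
  have "L2_set (\<lambda>s. cmod (\<Sum>i\<in>insert x F. a i s)) S = L2_set (\<lambda>s. cmod (a x s + (\<Sum>i\<in>F. a i s))) S"
    using insert by simp
  also have "\<dots> \<le> L2_set (\<lambda>s. cmod (a x s) + cmod (\<Sum>i\<in>F. a i s)) S"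
    by (rule L2_set_mono) (auto intro: norm_triangle_ineq)
  also have "\<dots> \<le> L2_set (\<lambda>s. cmod (a x s)) S + L2_set (\<lambda>s. cmod (\<Sum>i\<in>F. a i s)) S"
    by (rule L2_set_triangle_ineq)
  also have "\<dots> \<le> L2_set (\<lambda>s. cmod (a x s)) S + (\<Sum>i\<in>F. L2_set (\<lambda>s. cmod (a i s)) S)"
    using insert.IH by simp
  finally show ?case using insert by simp
qed

lemma pair_bound:
  fixes ni nj ri rj D :: real
  assumes "ni \<ge> 0" "nj \<ge> 0" "ri \<ge> 0" "rj \<ge> 0" "ri = 0 \<longrightarrow> ni = 0" "rj = 0 \<longrightarrow> nj = 0"
    and "D \<ge> ri" "D \<ge> rj"
  shows "ni * nj / D \<le> (ni\<^sup>2 * rj / ri\<^sup>2 + nj\<^sup>2 * ri / rj\<^sup>2) / 2"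
proof (cases "ri = 0 \<or> rj = 0")
  case True
  then have z: "ni * nj = 0" using assms by auto
  have z2: "ni * nj / D = 0" using z by simp
  have "0 \<le> (ni\<^sup>2 * rj / ri\<^sup>2 + nj\<^sup>2 * ri / rj\<^sup>2) / 2" using assms by simp
  then show ?thesis using z2 by linarith
next
  case False
  then have ri: "ri > 0" and rj: "rj > 0" using assms by auto
  have Dp: "D > 0" using ri assms by simp
  have amgm: "2 * ni * nj \<le> ni\<^sup>2 * rj / ri + nj\<^sup>2 * ri / rj"
  proof -
    have "0 \<le> (ni * rj - nj * ri)\<^sup>2" by simp
    then have "2 * ni * nj * (ri * rj) \<le> ni\<^sup>2 * rj\<^sup>2 + nj\<^sup>2 * ri\<^sup>2"
      by (simp add: power2_eq_square algebra_simps)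
    then show ?thesis using ri rj by (simp add: field_simps power2_eq_square)
  qed
  have "ni * nj / D \<le> (ni\<^sup>2 * rj / ri + nj\<^sup>2 * ri / rj) / 2 / D"
    using amgm Dp by (intro divide_right_mono) auto
  also have "\<dots> = (ni\<^sup>2 * rj / (ri * D) + nj\<^sup>2 * ri / (rj * D)) / 2"
    using ri rj Dp by (simp add: field_simps)
  also have "\<dots> \<le> (ni\<^sup>2 * rj / ri\<^sup>2 + nj\<^sup>2 * ri / rj\<^sup>2) / 2"
  proof -
    have "ni\<^sup>2 * rj / (ri * D) \<le> ni\<^sup>2 * rj / (ri * ri)"
      using ri rj assms by (intro divide_left_mono mult_left_mono) auto
    moreover have "nj\<^sup>2 * ri / (rj * D) \<le> nj\<^sup>2 * ri / (rj * rj)"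
      using ri rj assms by (intro divide_left_mono mult_left_mono) auto
    ultimately show ?thesis by (intro divide_right_mono add_mono) (simp_all add: power2_eq_square)
  qed
  finally show ?thesis .
qed


lemma sum_minus_single:
  fixes g :: "'a \<Rightarrow> real"
  assumes "finite I" "i \<in> I"
  shows "(\<Sum>j\<in>I-{i}. g j) = (\<Sum>j\<in>I. if j = i then 0 else g j)"
proof -
  have "(\<Sum>j\<in>I. if j = i then 0 else g j) = (if i = i then 0 else g i) + (\<Sum>j\<in>I-{i}. if j = i then 0 else g j)"
    using assms by (rule sum.remove)
  also have "\<dots> = (\<Sum>j\<in>I-{i}. g j)"
  proof -
    have "(\<Sum>j\<in>I-{i}. if j = i then 0 else g j) = (\<Sum>j\<in>I-{i}. g j)" by (rule sum.cong) auto
    then show ?thesis by simp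
  qed
  finally show ?thesis by simp
qed

lemma sum_offdiag_swap:
  fixes f :: "'a \<Rightarrow> 'a \<Rightarrow> real"
  assumes fin: "finite I"
  shows "(\<Sum>i\<in>I. \<Sum>j\<in>I-{i}. f j i) = (\<Sum>i\<in>I. \<Sum>j\<in>I-{i}. f i j)"
proof -
  have "(\<Sum>i\<in>I. \<Sum>j\<in>I-{i}. f j i) = (\<Sum>i\<in>I. \<Sum>j\<in>I. if j = i then 0 else f j i)"
    using fin by (intro sum.cong refl sum_minus_single)
  also have "\<dots> = (\<Sum>j\<in>I. \<Sum>i\<in>I. if j = i then 0 else f j i)" by (rule sum.swap)
  also have "\<dots> = (\<Sum>j\<in>I. \<Sum>i\<in>I. if i = j then 0 else f j i)"
    by (intro sum.cong refl) auto
  also have "\<dots> = (\<Sum>j\<in>I. \<Sum>i\<in>I-{j}. f j i)"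
    using fin by (intro sum.cong refl sum_minus_single[symmetric])
  finally show ?thesis .
qed

lemma sq_bound:
  fixes n r :: "nat \<Rightarrow> real" and x :: real
  assumes fin: "finite I" and x: "x \<ge> 0"
    and nn: "\<And>i. i \<in> I \<Longrightarrow> n i \<ge> 0" and rn: "\<And>i. i \<in> I \<Longrightarrow> r i \<ge> 0"
    and z: "\<And>i. i \<in> I \<Longrightarrow> r i = 0 \<Longrightarrow> n i = 0"
  shows "(\<Sum>i\<in>I. n i)\<^sup>2 / (x + (\<Sum>i\<in>I. r i))
    \<le> (\<Sum>i\<in>I. (n i)\<^sup>2 * (1 / (x + r i) + (\<Sum>j\<in>I-{i}. r j) / (r i)\<^sup>2))"
proof -
  define D where "D = x + (\<Sum>i\<in>I. r i)"
  have Dr: "\<And>i. i \<in> I \<Longrightarrow> D \<ge> x + r i"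
    unfolding D_def using fin rn by (auto intro: member_le_sum)
  have Dr2: "\<And>i. i \<in> I \<Longrightarrow> D \<ge> r i" using Dr x by (meson add_increasing order_refl order_trans)
  define A where "A i j = (n i)\<^sup>2 * r j / (r i)\<^sup>2" for i j
  define T where "T i j = (if i = j then (n i)\<^sup>2 / (x + r i) else (A i j + A j i) / 2)" for i j
  have "(\<Sum>i\<in>I. n i)\<^sup>2 / D = (\<Sum>i\<in>I. \<Sum>j\<in>I. n i * n j / D)"
    by (simp add: power2_eq_square sum_product sum_divide_distrib)
  also have "\<dots> \<le> (\<Sum>i\<in>I. \<Sum>j\<in>I. T i j)"
  proof (intro sum_mono)
    fix i j assume i: "i \<in> I" and j: "j \<in> I"
    show "n i * n j / D \<le> T i j"
    proof (cases "i = j")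
      case True
      have "n i * n i / D \<le> (n i)\<^sup>2 / (x + r i)"
      proof (cases "x + r i = 0")
        case True
        then have "r i = 0" using x rn[OF i] by simp
        then show ?thesis using z[OF i] by simp
      next
        case False
        then have "x + r i > 0" using x rn[OF i] by simp
        then show ?thesis using Dr[OF i] by (simp add: power2_eq_square divide_left_mono)
      qed
      then show ?thesis using True by (simp add: T_def)
    next
      case False
      have "n i * n j / D \<le> ((n i)\<^sup>2 * r j / (r i)\<^sup>2 + (n j)\<^sup>2 * r i / (r j)\<^sup>2) / 2"
        using i j nn rn z Dr2 by (intro pair_bound) auto
      then show ?thesis using False by (simp add: T_def A_def)
    qed
  qed
  also have "\<dots> = (\<Sum>i\<in>I. (n i)\<^sup>2 / (x + r i)) + (\<Sum>i\<in>I. \<Sum>j\<in>I-{i}. (A i j + A j i) / 2)"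
  proof -
    have "\<And>i. i \<in> I \<Longrightarrow> (\<Sum>j\<in>I. T i j) = T i i + (\<Sum>j\<in>I-{i}. T i j)"
      using fin by (intro sum.remove) auto
    moreover have "\<And>i. (\<Sum>j\<in>I-{i}. T i j) = (\<Sum>j\<in>I-{i}. (A i j + A j i) / 2)"
      by (intro sum.cong) (auto simp: T_def)
    ultimately show ?thesis by (simp add: T_def sum.distrib)
  qed
  also have "(\<Sum>i\<in>I. \<Sum>j\<in>I-{i}. (A i j + A j i) / 2) = (\<Sum>i\<in>I. \<Sum>j\<in>I-{i}. A i j)"
  proof -
    have "(\<Sum>i\<in>I. \<Sum>j\<in>I-{i}. (A i j + A j i) / 2)
        = ((\<Sum>i\<in>I. \<Sum>j\<in>I-{i}. A i j) + (\<Sum>i\<in>I. \<Sum>j\<in>I-{i}. A j i)) / 2"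
      by (simp add: sum.distrib sum_divide_distrib add_divide_distrib)
    also have "(\<Sum>i\<in>I. \<Sum>j\<in>I-{i}. A j i) = (\<Sum>i\<in>I. \<Sum>j\<in>I-{i}. A i j)"
      by (rule sum_offdiag_swap[OF fin])
    finally show ?thesis by simp
  qed
  also have "(\<Sum>i\<in>I. (n i)\<^sup>2 / (x + r i)) + (\<Sum>i\<in>I. \<Sum>j\<in>I-{i}. A i j)
      = (\<Sum>i\<in>I. (n i)\<^sup>2 * (1 / (x + r i) + (\<Sum>j\<in>I-{i}. r j) / (r i)\<^sup>2))"
    by (simp add: A_def sum.distrib distrib_left sum_distrib_left sum_divide_distrib)
  finally show ?thesis unfolding D_def .
qed


definition hv :: "(nat \<Rightarrow> real^3 \<Rightarrow> real^3) \<Rightarrow> real \<Rightarrow> nat \<Rightarrow> real^3 \<Rightarrow> real^3" where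
  "hv eps \<Lambda> l k = (\<chi> j. cutoff \<Lambda> (norm k) / (2 * pi * sqrt (norm k)) * (cross3 k (eps l k)) $ j)"

lemma cnj_Hvec: "cnj (Hvec eps \<Lambda> l k $ j) = \<i> * complex_of_real (hv eps \<Lambda> l k $ j)"
  unfolding Hvec_def hv_def by simp

lemma norm_Hvec_hv: "norm (Hvec eps \<Lambda> l k) = norm (hv eps \<Lambda> l k)"
proof -
  have h: "cmod (- \<i> * complex_of_real x) = \<bar>x\<bar>" for x by (simp add: norm_mult)
  have "(norm (Hvec eps \<Lambda> l k))\<^sup>2 = (norm (hv eps \<Lambda> l k))\<^sup>2"
    unfolding norm_sq_vec Hvec_def hv_def
    by (intro sum.cong refl) (simp only: vec_lambda_beta h real_norm_def power2_abs)
  then show ?thesis by (simp add: power2_eq_iff_nonneg)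
qed

lemma Hvec_zero: "Hvec eps \<Lambda> l 0 = 0"
  unfolding Hvec_def by (simp add: vec_eq_iff)

definition Npsi :: "msector \<Rightarrow> real^3 \<Rightarrow> (nat \<Rightarrow> photon) \<Rightarrow> real" where
  "Npsi \<psi> eta K = (\<Sum>t<2. (cmod (\<psi> eta K t))\<^sup>2)"

definition hfK :: "nat \<Rightarrow> (nat \<Rightarrow> photon) \<Rightarrow> real" where
  "hfK m K = (\<Sum>j<m. norm (fst (K j)))"

definition bfun :: "(nat \<Rightarrow> real^3 \<Rightarrow> real^3) \<Rightarrow> real \<Rightarrow> nat \<Rightarrow> msector \<Rightarrow> real^3 \<Rightarrow> photon \<Rightarrow> (nat \<Rightarrow> photon) \<Rightarrow> real" where
  "bfun eps \<Lambda> m \<psi> xi y K = (norm (Hvec eps \<Lambda> (snd y) (fst y)))\<^sup>2 * Npsi \<psi> (xi + fst y) K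
      * (1 / ((norm xi)\<^sup>2 + norm (fst y)) + hfK m K / (norm (fst y))\<^sup>2)"

lemma bfun_nonneg: "bfun eps \<Lambda> m \<psi> xi y K \<ge> 0"
  unfolding bfun_def Npsi_def hfK_def by (intro mult_nonneg_nonneg add_nonneg_nonneg divide_nonneg_nonneg sum_nonneg) auto

lemma hfK_remove_at:
  assumes "i < Suc m"
  shows "hfK m (remove_at m i ks) = (\<Sum>j\<in>{..<Suc m}-{i}. norm (fst (ks j)))"
proof -
  have "hfK m (remove_at m i ks) = (\<Sum>j<m. norm (fst (ks (if j < i then j else Suc j))))"
    unfolding hfK_def remove_at_def by (intro sum.cong) auto
  also have "\<dots> = (\<Sum>j\<in>{..<Suc m}-{i}. norm (fst (ks j)))"
    using sum.reindex_bij_betw[OF bij_shift[OF assms], of "\<lambda>j. norm (fst (ks j))"] by simp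
  finally show ?thesis .
qed

lemma pointwise_real:
  fixes xi :: "real^3" and ks :: "nat \<Rightarrow> photon"
  shows "(\<Sum>s<2. (cmod (sigmaEstar eps \<Lambda> m \<psi> xi ks s))\<^sup>2 / ((norm xi)\<^sup>2 + (\<Sum>i<Suc m. norm (fst (ks i)))))
    \<le> 1 / real (Suc m) * (\<Sum>i<Suc m. bfun eps \<Lambda> m \<psi> xi (ks i) (remove_at m i ks))"
proof -
  define a where "a i s = (\<Sum>j\<in>UNIV. \<Sum>t<2. pauli j s t * cnj (Hvec eps \<Lambda> (snd (ks i)) (fst (ks i)) $ j)
       * \<psi> (xi + fst (ks i)) (remove_at m i ks) t)" for i s
  define n where "n i = L2_set (\<lambda>s. cmod (a i s)) {..<2}" for i
  define r where "r i = norm (fst (ks i))" for i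
  define x where "x = (norm xi)\<^sup>2"
  define c where "c = complex_of_real (1 / sqrt (real (Suc m)))"
  have Phi: "sigmaEstar eps \<Lambda> m \<psi> xi ks s = c * (\<Sum>i<Suc m. a i s)" for s
  proof -
    define F where "F i j t = pauli j s t * cnj (Hvec eps \<Lambda> (snd (ks i)) (fst (ks i)) $ j)
       * \<psi> (xi + fst (ks i)) (remove_at m i ks) t" for i j t
    have "sigmaEstar eps \<Lambda> m \<psi> xi ks s = (\<Sum>j\<in>UNIV. \<Sum>t<2. c * (\<Sum>i<Suc m. F i j t))"
      unfolding sigmaEstar_def Estar_def c_def F_def
      by (intro sum.cong refl) (simp add: sum_distrib_left mult.assoc mult.left_commute del: sum.lessThan_Suc)
    also have "\<dots> = c * (\<Sum>j\<in>UNIV. \<Sum>t<2. \<Sum>i<Suc m. F i j t)"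
      by (simp add: sum_distrib_left)
    also have "(\<Sum>j\<in>UNIV. \<Sum>t<2. \<Sum>i<Suc m. F i j t) = (\<Sum>j\<in>UNIV. \<Sum>i<Suc m. \<Sum>t<2. F i j t)"
      by (rule sum.cong[OF refl]) (rule sum.swap)
    also have "\<dots> = (\<Sum>i<Suc m. \<Sum>j\<in>UNIV. \<Sum>t<2. F i j t)"
      by (rule sum.swap)
    finally show ?thesis unfolding a_def F_def .
  qed
  have c2: "(cmod c)\<^sup>2 = 1 / real (Suc m)"
    unfolding c_def norm_divide norm_one norm_of_real by (simp add: power_divide)
  have n2: "(n i)\<^sup>2 = (norm (Hvec eps \<Lambda> (snd (ks i)) (fst (ks i))))\<^sup>2 * Npsi \<psi> (xi + fst (ks i)) (remove_at m i ks)" for i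
  proof -
    have "(n i)\<^sup>2 = (\<Sum>s<2. (cmod (a i s))\<^sup>2)"
      unfolding n_def L2_set_def by (simp add: sum_nonneg)
    also have "\<dots> = (norm (hv eps \<Lambda> (snd (ks i)) (fst (ks i))))\<^sup>2 * (\<Sum>t<2. (cmod (\<psi> (xi + fst (ks i)) (remove_at m i ks) t))\<^sup>2)"
      unfolding a_def cnj_Hvec by (rule pauli_norm)
    finally show ?thesis unfolding Npsi_def norm_Hvec_hv .
  qed
  have sumPhi: "(\<Sum>s<2. (cmod (sigmaEstar eps \<Lambda> m \<psi> xi ks s))\<^sup>2) \<le> 1 / real (Suc m) * (\<Sum>i<Suc m. n i)\<^sup>2"
  proof -
    have "(\<Sum>s<2. (cmod (sigmaEstar eps \<Lambda> m \<psi> xi ks s))\<^sup>2) = 1 / real (Suc m) * (\<Sum>s<2. (cmod (\<Sum>i<Suc m. a i s))\<^sup>2)"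
      unfolding Phi by (simp add: norm_mult power_mult_distrib c2 sum_distrib_left)
    also have "(\<Sum>s<2. (cmod (\<Sum>i<Suc m. a i s))\<^sup>2) = (L2_set (\<lambda>s. cmod (\<Sum>i<Suc m. a i s)) {..<2})\<^sup>2"
      unfolding L2_set_def by (simp add: sum_nonneg)
    also have "\<dots> \<le> (\<Sum>i<Suc m. n i)\<^sup>2"
      unfolding n_def by (intro power_mono l2_tri) auto
    finally show ?thesis by (simp add: divide_right_mono)
  qed
  have nn: "n i \<ge> 0" for i unfolding n_def by simp
  have rz: "n i = 0" if "r i = 0" for i
  proof -
    have "fst (ks i) = 0" using that by (simp add: r_def)
    then have "(n i)\<^sup>2 = 0" unfolding n2 by (simp add: Hvec_zero)
    then show ?thesis by simp
  qed
  have "(\<Sum>s<2. (cmod (sigmaEstar eps \<Lambda> m \<psi> xi ks s))\<^sup>2 / ((norm xi)\<^sup>2 + (\<Sum>i<Suc m. norm (fst (ks i)))))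
      = (\<Sum>s<2. (cmod (sigmaEstar eps \<Lambda> m \<psi> xi ks s))\<^sup>2) / (x + (\<Sum>i<Suc m. r i))"
    unfolding x_def r_def by (simp add: sum_divide_distrib)
  also have "\<dots> \<le> 1 / real (Suc m) * (\<Sum>i<Suc m. n i)\<^sup>2 / (x + (\<Sum>i<Suc m. r i))"
    using sumPhi by (intro divide_right_mono) (auto simp: x_def r_def intro!: add_nonneg_nonneg sum_nonneg)
  also have "\<dots> = 1 / real (Suc m) * ((\<Sum>i<Suc m. n i)\<^sup>2 / (x + (\<Sum>i<Suc m. r i)))" by simp
  also have "\<dots> \<le> 1 / real (Suc m) * (\<Sum>i<Suc m. (n i)\<^sup>2 * (1 / (x + r i) + (\<Sum>j\<in>{..<Suc m}-{i}. r j) / (r i)\<^sup>2))"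
    using rz by (intro mult_left_mono sq_bound) (auto simp: x_def r_def nn)
  also have "(\<Sum>i<Suc m. (n i)\<^sup>2 * (1 / (x + r i) + (\<Sum>j\<in>{..<Suc m}-{i}. r j) / (r i)\<^sup>2))
      = (\<Sum>i<Suc m. bfun eps \<Lambda> m \<psi> xi (ks i) (remove_at m i ks))"
    by (intro sum.cong refl) (simp add: bfun_def n2 hfK_remove_at x_def r_def)
  finally show ?thesis .
qed


lemma sf_photon': "sigma_finite_measure photon_measure"
  unfolding photon_measure_def
  by (intro sigma_finite_pair_measure sigma_finite_lborel sigma_finite_measure_count_space_finite) auto

lemma sf_photons: "sigma_finite_measure (photons m)"
proof -
  interpret product_sigma_finite "\<lambda>_::nat. photon_measure"
    unfolding product_sigma_finite_def using sf_photon' by simp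
  interpret P: finite_product_sigma_finite "\<lambda>_::nat. photon_measure" "{..<m}"
    by standard simp
  show ?thesis unfolding photons_def by (rule P.sigma_finite_measure_axioms)
qed

lemma y_integral:
  fixes eta :: "real^3"
  assumes L: "\<Lambda> > 0" and N: "N \<ge> 0" and hf: "hf \<ge> 0"
  shows "(\<integral>\<^sup>+y. ennreal (hh \<Lambda> (fst y) * N * (1 / ((norm (eta - fst y))\<^sup>2 + norm (fst y)) + hf / (norm (fst y))\<^sup>2)) \<partial>photon_measure)
    = 2 * ennreal N * ((\<integral>\<^sup>+k. ennreal (hh \<Lambda> k / ((norm (eta - k))\<^sup>2 + norm k)) \<partial>lborel)
        + ennreal hf * (\<integral>\<^sup>+k. ennreal (hh \<Lambda> k / (norm k)\<^sup>2) \<partial>lborel))"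
proof -
  interpret pair_sigma_finite lborel "count_space {1::nat,2}"
    by (intro pair_sigma_finite.intro sigma_finite_lborel sigma_finite_measure_count_space_finite) auto
  define F where "F k = ennreal (hh \<Lambda> k * N * (1 / ((norm (eta - k))\<^sup>2 + norm k) + hf / (norm k)\<^sup>2))" for k :: "real^3"
  have Fm[measurable]: "F \<in> borel_measurable borel" unfolding F_def by measurable
  have "(\<integral>\<^sup>+y. ennreal (hh \<Lambda> (fst y) * N * (1 / ((norm (eta - fst y))\<^sup>2 + norm (fst y)) + hf / (norm (fst y))\<^sup>2)) \<partial>photon_measure)
      = (\<integral>\<^sup>+y. F (fst y) \<partial>(lborel \<Otimes>\<^sub>M count_space {1::nat,2}))"
    unfolding photon_measure_def F_def by (rule refl)
  also have "\<dots> = (\<integral>\<^sup>+k. (\<integral>\<^sup>+l. F k \<partial>count_space {1::nat,2}) \<partial>lborel)"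
  proof -
    have fm: "(\<lambda>y. F (fst y)) \<in> borel_measurable (lborel \<Otimes>\<^sub>M count_space {1::nat,2})" by measurable
    have sfc: "sigma_finite_measure (count_space {1::nat,2})"
      by (rule sigma_finite_measure_count_space_finite) simp
    from sigma_finite_measure.nn_integral_fst[OF sfc fm] show ?thesis by simp
  qed
  also have "\<dots> = (\<integral>\<^sup>+k. 2 * F k \<partial>lborel)"
    by (subst nn_integral_count_space_finite) (auto simp: mult_2)
  also have "\<dots> = 2 * (\<integral>\<^sup>+k. F k \<partial>lborel)"
    by (rule nn_integral_cmult) simp
  also have "(\<integral>\<^sup>+k. F k \<partial>lborel) = (\<integral>\<^sup>+k. ennreal N * (ennreal (hh \<Lambda> k / ((norm (eta - k))\<^sup>2 + norm k)) + ennreal hf * ennreal (hh \<Lambda> k / (norm k)\<^sup>2)) \<partial>lborel)"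
  proof (rule nn_integral_cong)
    fix k :: "real^3"
    define A where "A = hh \<Lambda> k / ((norm (eta - k))\<^sup>2 + norm k)"
    define B where "B = hh \<Lambda> k / (norm k)\<^sup>2"
    have A: "A \<ge> 0" and B: "B \<ge> 0" unfolding A_def B_def using hh_nonneg[of \<Lambda> k] by auto
    have E: "hh \<Lambda> k * N * (1 / ((norm (eta - k))\<^sup>2 + norm k) + hf / (norm k)\<^sup>2) = N * (A + hf * B)"
      unfolding A_def B_def by (simp add: field_simps)
    have "ennreal (N * (A + hf * B)) = ennreal N * ennreal (A + hf * B)"
      using N A B hf by (intro ennreal_mult) auto
    also have "ennreal (A + hf * B) = ennreal A + ennreal (hf * B)"
      using A B hf by (intro ennreal_plus) auto
    also have "ennreal (hf * B) = ennreal hf * ennreal B"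
      using B hf by (intro ennreal_mult) auto
    finally show "F k = ennreal N * (ennreal (hh \<Lambda> k / ((norm (eta - k))\<^sup>2 + norm k)) + ennreal hf * ennreal (hh \<Lambda> k / (norm k)\<^sup>2))"
      unfolding F_def E A_def B_def .
  qed
  also have "\<dots> = ennreal N * ((\<integral>\<^sup>+k. ennreal (hh \<Lambda> k / ((norm (eta - k))\<^sup>2 + norm k)) \<partial>lborel)
        + ennreal hf * (\<integral>\<^sup>+k. ennreal (hh \<Lambda> k / (norm k)\<^sup>2) \<partial>lborel))"
    by (subst nn_integral_cmult, measurable, subst nn_integral_add, measurable, subst nn_integral_cmult, measurable)
  finally show ?thesis by (simp add: mult.assoc)
qed


lemma Npsi_meas:
  assumes sv: "sector_vector m \<psi>"
    and f: "f \<in> M \<rightarrow>\<^sub>M borel" and g: "g \<in> M \<rightarrow>\<^sub>M photons m"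
  shows "(\<lambda>x. Npsi \<psi> (f x) (g x)) \<in> borel_measurable M"
proof -
  have fg: "(\<lambda>x. (f x, g x)) \<in> M \<rightarrow>\<^sub>M (lborel \<Otimes>\<^sub>M photons m)"
    using f g by (simp add: measurable_Pair)
  have "\<And>t. t < 2 \<Longrightarrow> (\<lambda>x. \<psi> (f x) (g x) t) \<in> borel_measurable M"
  proof -
    fix t :: nat assume t: "t < 2"
    have "(\<lambda>(xi, ks). \<psi> xi ks t) \<in> borel_measurable (lborel \<Otimes>\<^sub>M photons m)"
      using sv t unfolding sector_vector_def by blast
    from measurable_compose[OF fg this] show "(\<lambda>x. \<psi> (f x) (g x) t) \<in> borel_measurable M" by simp
  qed
  then show ?thesis unfolding Npsi_def
    by (intro borel_measurable_sum) (auto intro!: borel_measurable_power borel_measurable_norm)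
qed

lemma fst_photon_meas[measurable]: "fst \<in> photon_measure \<rightarrow>\<^sub>M borel"
  unfolding photon_measure_def using measurable_fst[of lborel "count_space {1::nat,2}"] by simp

lemma hfK_meas[measurable]: "hfK m \<in> borel_measurable (photons m)"
  unfolding hfK_def photons_def by measurable

definition Bf :: "real \<Rightarrow> nat \<Rightarrow> msector \<Rightarrow> real^3 \<Rightarrow> photon \<Rightarrow> (nat \<Rightarrow> photon) \<Rightarrow> ennreal" where
  "Bf \<Lambda> m \<psi> xi y K = ennreal (hh \<Lambda> (fst y) * Npsi \<psi> (xi + fst y) K
      * (1 / ((norm xi)\<^sup>2 + norm (fst y)) + hfK m K / (norm (fst y))\<^sup>2))"

lemma Bf_meas:
  assumes sv: "sector_vector m \<psi>"
    and f[measurable]: "f \<in> M \<rightarrow>\<^sub>M borel" and y[measurable]: "y \<in> M \<rightarrow>\<^sub>M photon_measure" and g[measurable]: "g \<in> M \<rightarrow>\<^sub>M photons m"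
  shows "(\<lambda>x. Bf \<Lambda> m \<psi> (f x) (y x) (g x)) \<in> borel_measurable M"
proof -
  have N[measurable]: "(\<lambda>x. Npsi \<psi> (f x + fst (y x)) (g x)) \<in> borel_measurable M"
    by (rule Npsi_meas[OF sv]) measurable
  show ?thesis unfolding Bf_def by measurable
qed


lemma integral_chain:
  assumes sv: "sector_vector m \<psi>"
  shows "(\<integral>\<^sup>+xi. (\<integral>\<^sup>+K. (\<integral>\<^sup>+y. Bf \<Lambda> m \<psi> xi y K \<partial>photon_measure) \<partial>photons m) \<partial>lborel)
       = (\<integral>\<^sup>+eta. (\<integral>\<^sup>+K. (\<integral>\<^sup>+y. Bf \<Lambda> m \<psi> (eta - fst y) y K \<partial>photon_measure) \<partial>photons m) \<partial>lborel)"
proof -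
  note Bm = Bf_meas[OF sv, measurable (raw)]
  interpret LQ: pair_sigma_finite lborel "photons m \<Otimes>\<^sub>M photon_measure"
    by (intro pair_sigma_finite.intro sigma_finite_lborel sigma_finite_pair_measure sf_photons sf_photon')
  have sfQ: "sigma_finite_measure photon_measure" by (rule sf_photon')
  have inner: "(\<integral>\<^sup>+K. (\<integral>\<^sup>+y. f (K, y) \<partial>photon_measure) \<partial>photons m) = (\<integral>\<^sup>+z. f z \<partial>(photons m \<Otimes>\<^sub>M photon_measure))"
    if f: "f \<in> borel_measurable (photons m \<Otimes>\<^sub>M photon_measure)" for f
    by (rule sigma_finite_measure.nn_integral_fst[OF sfQ f])
  have m1: "(\<lambda>(xi, z). Bf \<Lambda> m \<psi> xi (snd z) (fst z)) \<in> borel_measurable (lborel \<Otimes>\<^sub>M (photons m \<Otimes>\<^sub>M photon_measure))"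
    by measurable
  have m2: "(\<lambda>(eta, z). Bf \<Lambda> m \<psi> (eta - fst (snd z)) (snd z) (fst z)) \<in> borel_measurable (lborel \<Otimes>\<^sub>M (photons m \<Otimes>\<^sub>M photon_measure))"
    by measurable
  have "(\<integral>\<^sup>+xi. (\<integral>\<^sup>+K. (\<integral>\<^sup>+y. Bf \<Lambda> m \<psi> xi y K \<partial>photon_measure) \<partial>photons m) \<partial>lborel)
      = (\<integral>\<^sup>+xi. (\<integral>\<^sup>+z. Bf \<Lambda> m \<psi> xi (snd z) (fst z) \<partial>(photons m \<Otimes>\<^sub>M photon_measure)) \<partial>lborel)"
    by (rule nn_integral_cong) (subst inner[symmetric], measurable)
  also have "\<dots> = (\<integral>\<^sup>+z. (\<integral>\<^sup>+xi. Bf \<Lambda> m \<psi> xi (snd z) (fst z) \<partial>lborel) \<partial>(photons m \<Otimes>\<^sub>M photon_measure))"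
    using LQ.Fubini'[OF m1] by (simp add: case_prod_beta)
  also have "\<dots> = (\<integral>\<^sup>+z. (\<integral>\<^sup>+eta. Bf \<Lambda> m \<psi> (eta - fst (snd z)) (snd z) (fst z) \<partial>lborel) \<partial>(photons m \<Otimes>\<^sub>M photon_measure))"
  proof (rule nn_integral_cong)
    fix z :: "(nat \<Rightarrow> photon) \<times> photon"
    assume z: "z \<in> space (photons m \<Otimes>\<^sub>M photon_measure)"
    then have zK: "fst z \<in> space (photons m)" and zy: "snd z \<in> space photon_measure"
      by (auto simp: space_pair_measure)
    have gm: "(\<lambda>xi. Bf \<Lambda> m \<psi> xi (snd z) (fst z)) \<in> borel_measurable borel"
      using zK zy by measurable
    have "(\<integral>\<^sup>+xi. Bf \<Lambda> m \<psi> xi (snd z) (fst z) \<partial>lborel)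
        = (\<integral>\<^sup>+xi. Bf \<Lambda> m \<psi> xi (snd z) (fst z) \<partial>distr lborel borel ((+) (- fst (snd z))))"
      by (simp add: lborel_distr_plus)
    also have "\<dots> = (\<integral>\<^sup>+eta. Bf \<Lambda> m \<psi> (- fst (snd z) + eta) (snd z) (fst z) \<partial>lborel)"
      using gm by (subst nn_integral_distr) auto
    finally show "(\<integral>\<^sup>+xi. Bf \<Lambda> m \<psi> xi (snd z) (fst z) \<partial>lborel)
        = (\<integral>\<^sup>+eta. Bf \<Lambda> m \<psi> (eta - fst (snd z)) (snd z) (fst z) \<partial>lborel)"
      by (simp add: algebra_simps)
  qed
  also have "\<dots> = (\<integral>\<^sup>+eta. (\<integral>\<^sup>+z. Bf \<Lambda> m \<psi> (eta - fst (snd z)) (snd z) (fst z) \<partial>(photons m \<Otimes>\<^sub>M photon_measure)) \<partial>lborel)"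
    using LQ.Fubini'[OF m2] by (simp add: case_prod_beta)
  also have "\<dots> = (\<integral>\<^sup>+eta. (\<integral>\<^sup>+K. (\<integral>\<^sup>+y. Bf \<Lambda> m \<psi> (eta - fst y) y K \<partial>photon_measure) \<partial>photons m) \<partial>lborel)"
  proof (rule nn_integral_cong)
    fix eta :: "real^3"
    have "(\<lambda>z. Bf \<Lambda> m \<psi> (eta - fst (snd z)) (snd z) (fst z)) \<in> borel_measurable (photons m \<Otimes>\<^sub>M photon_measure)"
      by measurable
    from inner[OF this] show "(\<integral>\<^sup>+z. Bf \<Lambda> m \<psi> (eta - fst (snd z)) (snd z) (fst z) \<partial>(photons m \<Otimes>\<^sub>M photon_measure))
        = (\<integral>\<^sup>+K. (\<integral>\<^sup>+y. Bf \<Lambda> m \<psi> (eta - fst y) y K \<partial>photon_measure) \<partial>photons m)" by simp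
  qed
  finally show ?thesis .
qed


lemma remove_at_meas:
  assumes i: "i < Suc m"
  shows "remove_at m i \<in> photons (Suc m) \<rightarrow>\<^sub>M photons m"
proof -
  have "remove_at m i = (\<lambda>ks. \<lambda>j\<in>{..<m}. ks (if j < i then j else Suc j))"
    by (auto simp: remove_at_def fun_eq_iff)
  also have "\<dots> \<in> photons (Suc m) \<rightarrow>\<^sub>M photons m"
    unfolding photons_def using i
    by (intro measurable_restrict measurable_component_singleton) auto
  finally show ?thesis .
qed

lemma comp_meas:
  assumes i: "i < Suc m"
  shows "(\<lambda>ks. ks i) \<in> photons (Suc m) \<rightarrow>\<^sub>M photon_measure"
  unfolding photons_def using i by (intro measurable_component_singleton) auto

lemma space_photon: "space photon_measure = UNIV \<times> {1,2}"
  unfolding photon_measure_def by (simp add: space_pair_measure)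

lemma step_S123:
  assumes pol: "polarization eps" and sv: "sector_vector m \<psi>"
  shows "resolvent_form (Suc m) (sigmaEstar eps \<Lambda> m \<psi>)
    \<le> (\<integral>\<^sup>+eta. (\<integral>\<^sup>+K. (\<integral>\<^sup>+y. Bf \<Lambda> m \<psi> (eta - fst y) y K \<partial>photon_measure) \<partial>photons m) \<partial>lborel)"
proof -
  note Bm = Bf_meas[OF sv, measurable (raw)]
  define c where "c = ennreal (1 / real (Suc m))"
  have bB: "ennreal (bfun eps \<Lambda> m \<psi> xi y K) = Bf \<Lambda> m \<psi> xi y K" if y: "y \<in> space photon_measure" for xi y K
  proof -
    have "snd y \<in> {1,2}" using y by (auto simp: space_photon)
    then have "(norm (Hvec eps \<Lambda> (snd y) (fst y)))\<^sup>2 = hh \<Lambda> (fst y)"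
      using Hn_formula[OF pol] by (simp add: hh_def)
    then show ?thesis unfolding bfun_def Bf_def by simp
  qed
  define G where "G xi = (\<integral>\<^sup>+K. (\<integral>\<^sup>+y. Bf \<Lambda> m \<psi> xi y K \<partial>photon_measure) \<partial>photons m)" for xi
  have "resolvent_form (Suc m) (sigmaEstar eps \<Lambda> m \<psi>)
      \<le> (\<integral>\<^sup>+xi. (\<integral>\<^sup>+ks. c * (\<Sum>i<Suc m. Bf \<Lambda> m \<psi> xi (ks i) (remove_at m i ks)) \<partial>photons (Suc m)) \<partial>lborel)"
    unfolding resolvent_form_def
  proof (intro nn_integral_mono)
    fix xi :: "real^3" and ks :: "nat \<Rightarrow> photon"
    assume ks: "ks \<in> space (photons (Suc m))"
    have ksi: "ks i \<in> space photon_measure" if "i < Suc m" for i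
      using ks that unfolding photons_def by (auto simp: space_PiM)
    have "(\<Sum>s<2. ennreal ((cmod (sigmaEstar eps \<Lambda> m \<psi> xi ks s))\<^sup>2 / ((norm xi)\<^sup>2 + (\<Sum>i<Suc m. norm (fst (ks i))))))
        = ennreal (\<Sum>s<2. (cmod (sigmaEstar eps \<Lambda> m \<psi> xi ks s))\<^sup>2 / ((norm xi)\<^sup>2 + (\<Sum>i<Suc m. norm (fst (ks i)))))"
      by (intro sum_ennreal divide_nonneg_nonneg add_nonneg_nonneg sum_nonneg) auto
    also have "\<dots> \<le> ennreal (1 / real (Suc m) * (\<Sum>i<Suc m. bfun eps \<Lambda> m \<psi> xi (ks i) (remove_at m i ks)))"
      by (intro ennreal_leI pointwise_real)
    also have "\<dots> = c * (\<Sum>i<Suc m. ennreal (bfun eps \<Lambda> m \<psi> xi (ks i) (remove_at m i ks)))"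
      unfolding c_def by (subst ennreal_mult) (auto simp: bfun_nonneg sum_nonneg)
    also have "\<dots> = c * (\<Sum>i<Suc m. Bf \<Lambda> m \<psi> xi (ks i) (remove_at m i ks))"
      using ksi bB by simp
    finally show "(\<Sum>s<2. ennreal ((cmod (sigmaEstar eps \<Lambda> m \<psi> xi ks s))\<^sup>2 / ((norm xi)\<^sup>2 + (\<Sum>i<Suc m. norm (fst (ks i))))))
        \<le> c * (\<Sum>i<Suc m. Bf \<Lambda> m \<psi> xi (ks i) (remove_at m i ks))" .
  qed
  also have "\<dots> = (\<integral>\<^sup>+xi. G xi \<partial>lborel)"
  proof (rule nn_integral_cong)
    fix xi :: "real^3"
    have mi: "(\<lambda>ks. Bf \<Lambda> m \<psi> xi (ks i) (remove_at m i ks)) \<in> borel_measurable (photons (Suc m))" if "i < Suc m" for i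
      using remove_at_meas[OF that] comp_meas[OF that] by measurable
    have eqi: "(\<integral>\<^sup>+ks. Bf \<Lambda> m \<psi> xi (ks i) (remove_at m i ks) \<partial>photons (Suc m)) = G xi" if "i < Suc m" for i
    proof -
      have "(\<lambda>p. Bf \<Lambda> m \<psi> xi (fst p) (snd p)) \<in> borel_measurable (photon_measure \<Otimes>\<^sub>M photons m)"
        by measurable
      from nn_integral_remove_at[OF that this] show ?thesis unfolding G_def .
    qed
    have "(\<integral>\<^sup>+ks. c * (\<Sum>i<Suc m. Bf \<Lambda> m \<psi> xi (ks i) (remove_at m i ks)) \<partial>photons (Suc m))
        = c * (\<Sum>i<Suc m. (\<integral>\<^sup>+ks. Bf \<Lambda> m \<psi> xi (ks i) (remove_at m i ks) \<partial>photons (Suc m)))"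
    proof -
      have "(\<integral>\<^sup>+ks. (\<Sum>i<Suc m. Bf \<Lambda> m \<psi> xi (ks i) (remove_at m i ks)) \<partial>photons (Suc m))
          = (\<Sum>i<Suc m. (\<integral>\<^sup>+ks. Bf \<Lambda> m \<psi> xi (ks i) (remove_at m i ks) \<partial>photons (Suc m)))"
        using mi by (intro nn_integral_sum) auto
      then show ?thesis
        using mi by (subst nn_integral_cmult) (auto intro!: borel_measurable_sum simp del: sum.lessThan_Suc)
    qed
    also have "\<dots> = c * (\<Sum>i<Suc m. G xi)" using eqi by simp
    also have "\<dots> = G xi"
    proof -
      have "c * of_nat (Suc m) = ennreal (1 / real (Suc m)) * ennreal (real (Suc m))"
        unfolding c_def by (simp only: ennreal_of_nat_eq_real_of_nat)
      also have "\<dots> = ennreal (1 / real (Suc m) * real (Suc m))"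
        by (rule ennreal_mult[symmetric]) auto
      also have "\<dots> = 1" by simp
      finally have c1: "c * of_nat (Suc m) = 1" .
      have "(\<Sum>i<Suc m. G xi) = of_nat (Suc m) * G xi" by (simp only: sum_constant card_lessThan)
      then show ?thesis using c1 by (simp add: mult.assoc[symmetric])
    qed
    finally show "(\<integral>\<^sup>+ks. c * (\<Sum>i<Suc m. Bf \<Lambda> m \<psi> xi (ks i) (remove_at m i ks)) \<partial>photons (Suc m)) = G xi" .
  qed
  also have "\<dots> = (\<integral>\<^sup>+eta. (\<integral>\<^sup>+K. (\<integral>\<^sup>+y. Bf \<Lambda> m \<psi> (eta - fst y) y K \<partial>photon_measure) \<partial>photons m) \<partial>lborel)"
    unfolding G_def by (rule integral_chain[OF sv])
  finally show ?thesis .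
qed


lemma epsE_eq:
  assumes pol: "polarization eps"
  shows "epsE eps \<Lambda> = 2 * (\<integral>\<^sup>+k. ennreal (hh \<Lambda> k / ((norm k)\<^sup>2 + norm k)) \<partial>lborel)"
proof -
  have "\<And>l. l \<in> {1::nat,2} \<Longrightarrow> (\<integral>\<^sup>+k. ennreal ((norm (Hvec eps \<Lambda> l k))\<^sup>2 / ((norm k)\<^sup>2 + norm k)) \<partial>lborel)
      = (\<integral>\<^sup>+k. ennreal (hh \<Lambda> k / ((norm k)\<^sup>2 + norm k)) \<partial>lborel)"
    using Hn_formula[OF pol] by (simp add: hh_def)
  then show ?thesis unfolding epsE_def by (simp add: mult_2)
qed

lemma inner_bound:
  fixes eta :: "real^3"
  assumes pol: "polarization eps" and L: "\<Lambda> > 0"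
  shows "(\<integral>\<^sup>+y. Bf \<Lambda> m \<psi> (eta - fst y) y K \<partial>photon_measure)
    \<le> epsE eps \<Lambda> * ennreal (Npsi \<psi> eta K)
       + ennreal (16 * unit_ball_vol 3 / pi\<^sup>2 * \<Lambda>) * ennreal ((norm eta)\<^sup>2 * Npsi \<psi> eta K)
       + ennreal (4 * unit_ball_vol 3 / pi\<^sup>2 * \<Lambda>\<^sup>2) * ennreal (hfK m K * Npsi \<psi> eta K)"
proof -
  define N where "N = Npsi \<psi> eta K"
  define hf where "hf = hfK m K"
  define V where "V = unit_ball_vol 3"
  define Q where "Q = (\<integral>\<^sup>+k. ennreal (hh \<Lambda> k / ((norm k)\<^sup>2 + norm k)) \<partial>lborel)"
  define X where "X = (\<integral>\<^sup>+k. ennreal (hh \<Lambda> k / ((norm (eta - k))\<^sup>2 + norm k)) \<partial>lborel)"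
  define Y where "Y = (\<integral>\<^sup>+k. ennreal (hh \<Lambda> k / (norm k)\<^sup>2) \<partial>lborel)"
  define a where "a = 8 * V / pi\<^sup>2 * \<Lambda> * (norm eta)\<^sup>2"
  define b where "b = 2 * V / pi\<^sup>2 * \<Lambda>\<^sup>2"
  have V: "V > 0" unfolding V_def by simp
  have N: "N \<ge> 0" unfolding N_def Npsi_def by (simp add: sum_nonneg)
  have hf: "hf \<ge> 0" unfolding hf_def hfK_def by (simp add: sum_nonneg)
  have a: "a \<ge> 0" and b: "b \<ge> 0" unfolding a_def b_def using V L by auto
  have "(\<integral>\<^sup>+y. Bf \<Lambda> m \<psi> (eta - fst y) y K \<partial>photon_measure)
      = (\<integral>\<^sup>+y. ennreal (hh \<Lambda> (fst y) * N * (1 / ((norm (eta - fst y))\<^sup>2 + norm (fst y)) + hf / (norm (fst y))\<^sup>2)) \<partial>photon_measure)"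
    unfolding Bf_def N_def hf_def by simp
  also have "\<dots> = 2 * ennreal N * (X + ennreal hf * Y)"
    unfolding X_def Y_def by (rule y_integral[OF L N hf])
  also have "\<dots> \<le> 2 * ennreal N * ((Q + ennreal a) + ennreal hf * ennreal b)"
    using lemmaA[OF L, of eta] lemmaB[OF L] unfolding X_def Y_def Q_def a_def b_def V_def
    by (intro mult_left_mono add_mono) auto
  also have "\<dots> = (2 * Q) * ennreal N + ennreal (2 * N * a) + ennreal (2 * N * (hf * b))"
  proof -
    have e1: "2 * ennreal N * ennreal a = ennreal (2 * N * a)"
      using N a by (simp add: ennreal_mult[symmetric] ennreal_numeral[symmetric] del: ennreal_numeral)
    have e2: "2 * ennreal N * (ennreal hf * ennreal b) = ennreal (2 * N * (hf * b))"
      using N hf b by (simp add: ennreal_mult[symmetric] ennreal_numeral[symmetric] del: ennreal_numeral)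
    have "2 * ennreal N * ((Q + ennreal a) + ennreal hf * ennreal b)
        = (2 * Q) * ennreal N + 2 * ennreal N * ennreal a + 2 * ennreal N * (ennreal hf * ennreal b)"
      by (simp add: distrib_left mult_ac)
    then show ?thesis unfolding e1 e2 .
  qed
  also have "\<dots> = epsE eps \<Lambda> * ennreal N
       + ennreal (16 * V / pi\<^sup>2 * \<Lambda>) * ennreal ((norm eta)\<^sup>2 * N)
       + ennreal (4 * V / pi\<^sup>2 * \<Lambda>\<^sup>2) * ennreal (hf * N)"
  proof -
    have "ennreal (2 * N * a) = ennreal (16 * V / pi\<^sup>2 * \<Lambda> * ((norm eta)\<^sup>2 * N))"
      unfolding a_def by (simp add: field_simps)
    also have "\<dots> = ennreal (16 * V / pi\<^sup>2 * \<Lambda>) * ennreal ((norm eta)\<^sup>2 * N)"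
      using V L N by (intro ennreal_mult) auto
    finally have e1: "ennreal (2 * N * a) = ennreal (16 * V / pi\<^sup>2 * \<Lambda>) * ennreal ((norm eta)\<^sup>2 * N)" .
    have "ennreal (2 * N * (hf * b)) = ennreal (4 * V / pi\<^sup>2 * \<Lambda>\<^sup>2 * (hf * N))"
      unfolding b_def by (simp add: field_simps)
    also have "\<dots> = ennreal (4 * V / pi\<^sup>2 * \<Lambda>\<^sup>2) * ennreal (hf * N)"
      using V L N hf by (intro ennreal_mult) auto
    finally have e2: "ennreal (2 * N * (hf * b)) = ennreal (4 * V / pi\<^sup>2 * \<Lambda>\<^sup>2) * ennreal (hf * N)" .
    show ?thesis unfolding e1 e2 epsE_eq[OF pol] Q_def ..
  qed
  finally show ?thesis unfolding N_def hf_def V_def .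
qed


lemma norm_sq_Npsi: "norm_sq m \<psi> = (\<integral>\<^sup>+xi. (\<integral>\<^sup>+K. ennreal (Npsi \<psi> xi K) \<partial>photons m) \<partial>lborel)"
  unfolding norm_sq_def Npsi_def by simp

lemma p_norm_sq_Npsi: "p_norm_sq m \<psi> = (\<integral>\<^sup>+xi. (\<integral>\<^sup>+K. ennreal ((norm xi)\<^sup>2 * Npsi \<psi> xi K) \<partial>photons m) \<partial>lborel)"
  unfolding p_norm_sq_def Npsi_def by (simp add: sum_distrib_left)

lemma Hf_form_Npsi: "Hf_form m \<psi> = (\<integral>\<^sup>+xi. (\<integral>\<^sup>+K. ennreal (hfK m K * Npsi \<psi> xi K) \<partial>photons m) \<partial>lborel)"
  unfolding Hf_form_def Npsi_def hfK_def by (simp add: sum_distrib_left sum_nonneg)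

lemma step_S5:
  assumes sv: "sector_vector m \<psi>"
  shows "(\<integral>\<^sup>+eta. (\<integral>\<^sup>+K. E * ennreal (Npsi \<psi> eta K) + ennreal A * ennreal ((norm eta)\<^sup>2 * Npsi \<psi> eta K)
            + ennreal B * ennreal (hfK m K * Npsi \<psi> eta K) \<partial>photons m) \<partial>lborel)
     = E * norm_sq m \<psi> + ennreal A * p_norm_sq m \<psi> + ennreal B * Hf_form m \<psi>"
proof -
  interpret Pm: sigma_finite_measure "photons m" by (rule sf_photons)
  have Nm[measurable]: "(\<lambda>p. Npsi \<psi> (fst p) (snd p)) \<in> borel_measurable (lborel \<Otimes>\<^sub>M photons m)"
    by (rule Npsi_meas[OF sv]) auto
  have m1[measurable]: "(\<lambda>(eta, K). ennreal (Npsi \<psi> eta K)) \<in> borel_measurable (lborel \<Otimes>\<^sub>M photons m)"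
    unfolding case_prod_beta by measurable
  have m2[measurable]: "(\<lambda>(eta, K). ennreal ((norm eta)\<^sup>2 * Npsi \<psi> eta K)) \<in> borel_measurable (lborel \<Otimes>\<^sub>M photons m)"
    unfolding case_prod_beta by measurable
  have m3[measurable]: "(\<lambda>(eta, K). ennreal (hfK m K * Npsi \<psi> eta K)) \<in> borel_measurable (lborel \<Otimes>\<^sub>M photons m)"
    unfolding case_prod_beta by measurable
  have i1: "(\<lambda>eta. \<integral>\<^sup>+K. ennreal (Npsi \<psi> eta K) \<partial>photons m) \<in> borel_measurable lborel"
    using Pm.borel_measurable_nn_integral[OF m1] .
  have i2: "(\<lambda>eta. \<integral>\<^sup>+K. ennreal ((norm eta)\<^sup>2 * Npsi \<psi> eta K) \<partial>photons m) \<in> borel_measurable lborel"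
    using Pm.borel_measurable_nn_integral[OF m2] .
  have i3: "(\<lambda>eta. \<integral>\<^sup>+K. ennreal (hfK m K * Npsi \<psi> eta K) \<partial>photons m) \<in> borel_measurable lborel"
    using Pm.borel_measurable_nn_integral[OF m3] .
  have inner: "(\<integral>\<^sup>+K. E * ennreal (Npsi \<psi> eta K) + ennreal A * ennreal ((norm eta)\<^sup>2 * Npsi \<psi> eta K)
            + ennreal B * ennreal (hfK m K * Npsi \<psi> eta K) \<partial>photons m)
      = E * (\<integral>\<^sup>+K. ennreal (Npsi \<psi> eta K) \<partial>photons m) + ennreal A * (\<integral>\<^sup>+K. ennreal ((norm eta)\<^sup>2 * Npsi \<psi> eta K) \<partial>photons m)
        + ennreal B * (\<integral>\<^sup>+K. ennreal (hfK m K * Npsi \<psi> eta K) \<partial>photons m)" for eta :: "real^3"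
  proof -
    have a1: "(\<lambda>K. ennreal (Npsi \<psi> eta K)) \<in> borel_measurable (photons m)"
      using measurable_Pair2[OF m1, of eta] by simp
    have a2: "(\<lambda>K. ennreal ((norm eta)\<^sup>2 * Npsi \<psi> eta K)) \<in> borel_measurable (photons m)"
      using measurable_Pair2[OF m2, of eta] by simp
    have a3: "(\<lambda>K. ennreal (hfK m K * Npsi \<psi> eta K)) \<in> borel_measurable (photons m)"
      using measurable_Pair2[OF m3, of eta] by simp
    show ?thesis using a1 a2 a3
      by (simp add: nn_integral_add nn_integral_cmult)
  qed
  show ?thesis
    unfolding inner norm_sq_Npsi p_norm_sq_Npsi Hf_form_Npsi using i1 i2 i3
    by (simp add: nn_integral_add nn_integral_cmult)
qed


theorem mainTheorem4:
  shows "\<exists>C>0. \<forall>eps. polarization eps \<longrightarrow>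
     (\<forall>m \<Lambda> \<psi>. \<Lambda> > 0 \<longrightarrow> sector_vector m \<psi> \<longrightarrow>
        p_norm_sq m \<psi> < \<infinity> \<longrightarrow> Hf_form m \<psi> < \<infinity> \<longrightarrow>
        resolvent_form (Suc m) (sigmaEstar eps \<Lambda> m \<psi>)
          \<le> epsE eps \<Lambda> * norm_sq m \<psi>
             + ennreal (C * \<Lambda>) * (p_norm_sq m \<psi> + ennreal \<Lambda> * Hf_form m \<psi>))"
proof (intro exI[of _ "16 * unit_ball_vol 3 / pi\<^sup>2"] conjI allI impI)
  define V where "V = unit_ball_vol 3"
  have V: "V > 0" unfolding V_def by simp
  show "16 * unit_ball_vol 3 / pi\<^sup>2 > 0" by simp
  fix eps :: "nat \<Rightarrow> real^3 \<Rightarrow> real^3" and m :: nat and \<Lambda> :: real and \<psi> :: msector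
  assume pol: "polarization eps" and L: "\<Lambda> > 0" and sv: "sector_vector m \<psi>"
    and "p_norm_sq m \<psi> < \<infinity>" and "Hf_form m \<psi> < \<infinity>"
  define A where "A = 16 * V / pi\<^sup>2 * \<Lambda>"
  define B where "B = 4 * V / pi\<^sup>2 * \<Lambda>\<^sup>2"
  have "resolvent_form (Suc m) (sigmaEstar eps \<Lambda> m \<psi>)
      \<le> (\<integral>\<^sup>+eta. (\<integral>\<^sup>+K. (\<integral>\<^sup>+y. Bf \<Lambda> m \<psi> (eta - fst y) y K \<partial>photon_measure) \<partial>photons m) \<partial>lborel)"
    by (rule step_S123[OF pol sv])
  also have "\<dots> \<le> (\<integral>\<^sup>+eta. (\<integral>\<^sup>+K. epsE eps \<Lambda> * ennreal (Npsi \<psi> eta K) + ennreal A * ennreal ((norm eta)\<^sup>2 * Npsi \<psi> eta K)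
            + ennreal B * ennreal (hfK m K * Npsi \<psi> eta K) \<partial>photons m) \<partial>lborel)"
    unfolding A_def B_def V_def
    by (intro nn_integral_mono inner_bound[OF pol L])
  also have "\<dots> = epsE eps \<Lambda> * norm_sq m \<psi> + ennreal A * p_norm_sq m \<psi> + ennreal B * Hf_form m \<psi>"
    by (rule step_S5[OF sv])
  also have "\<dots> \<le> epsE eps \<Lambda> * norm_sq m \<psi> + ennreal (16 * unit_ball_vol 3 / pi\<^sup>2 * \<Lambda>) * (p_norm_sq m \<psi> + ennreal \<Lambda> * Hf_form m \<psi>)"
  proof -
    have "ennreal B \<le> ennreal A * ennreal \<Lambda>"
    proof -
      have "B \<le> A * \<Lambda>" unfolding A_def B_def using V L by (simp add: power2_eq_square field_simps)
      then have "ennreal B \<le> ennreal (A * \<Lambda>)" by (rule ennreal_leI)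
      also have "\<dots> = ennreal A * ennreal \<Lambda>" using V L unfolding A_def by (intro ennreal_mult) auto
      finally show ?thesis .
    qed
    then have "ennreal B * Hf_form m \<psi> \<le> ennreal A * (ennreal \<Lambda> * Hf_form m \<psi>)"
      by (simp add: mult.assoc[symmetric] mult_right_mono)
    then show ?thesis unfolding A_def V_def by (simp add: distrib_left add.assoc add_left_mono)
  qed
  finally show "resolvent_form (Suc m) (sigmaEstar eps \<Lambda> m \<psi>)
          \<le> epsE eps \<Lambda> * norm_sq m \<psi>
             + ennreal (16 * unit_ball_vol 3 / pi\<^sup>2 * \<Lambda>) * (p_norm_sq m \<psi> + ennreal \<Lambda> * Hf_form m \<psi>)" .
qed

end
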